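(* Let $\Gamma$ be a countably infinite residually finite group and $\{\Gamma_n\}_{n\in\mathbb N}$ a strictly decreasing sequence of finite-index normal subgroups with $\bigcap_n\Gamma_n=\{e_\Gamma\}$ and $[\Gamma_n:\Gamma_{n+1}]>2$ for all $n$. Let $X=\varprojlim\Gamma/\Gamma_n$ with the left translation action of $\Gamma$ and quotient maps $\pi_n:X\to\Gamma/\Gamma_n$. For $n\ge2$ choose $\gamma_n\in\Gamma_{n-1}\setminus\Gamma_n$, let $C_n=\pi_n^{-1}(\gamma_n\Gamma_n)$, $X_+=\bigcup_{n\ge2}C_n$, $X_-=X\setminus(X_+\cup\{e_\Gamma\})$, and define $f:X\setminus\{e_\Gamma\}\to\{1,-1\}$ by $f=1$ on $X_+$ and $f=-1$ on $X_-$. Then the McMahon extension action $\Gamma\curvearrowright X_f$ associated to $(X, e_\Gamma, f)$ is null.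
   Context: $X=\varprojlim\Gamma/\Gamma_n$ is the compact metrizable group of compatible sequences in $\prod_n\Gamma/\Gamma_n$; $\Gamma$ embeds densely and acts minimally and freely by left translation. Under the hypotheses, $f$ is continuous and cannot be extended continuously to $X$. McMahon extension: the (unique up to conjugacy) minimal continuous action $\Gamma\curvearrowright X_f$ on a compact metrizable space with a $\Gamma$-equivariant continuous surjection $\pi_f:X_f\to X$ such that $\pi_f^{-1}(x)$ is one point for $x\notin\Gamma e_\Gamma$ and two points for $x\in\Gamma e_\Gamma$, and $f\circ\pi_f$ on $X_f\setminus\pi_f^{-1}(e_\Gamma)$ extends continuously to $X_f$. Null: for every sequence $\{s_n\}$ in $\Gamma$ and finite open cover $\mathcal U$, $\limsup_n\frac1n\log N(\bigvee_{i=1}^n s_i^{-1}\mathcal U)=0$, $N$ the minimal subcover size. *)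

theory Defs
  imports "HOL-Algebra.Algebra" "HOL-Analysis.Analysis" "HOL-Library.Liminf_Limsup"
begin

definition residually_finite :: "('a, 'c) monoid_scheme \<Rightarrow> bool" where
  "residually_finite G \<longleftrightarrow>
     (\<forall>g \<in> carrier G. g \<noteq> \<one>\<^bsub>G\<^esub> \<longrightarrow>
        (\<exists>N. N \<lhd> G \<and> finite (rcosets\<^bsub>G\<^esub> N) \<and> g \<notin> N))"

definition invlim :: "('a, 'c) monoid_scheme \<Rightarrow> (nat \<Rightarrow> 'a set) \<Rightarrow> (nat \<Rightarrow> 'a set) set" where
  "invlim G Gam = {x. (\<forall>n. x n \<in> rcosets\<^bsub>G\<^esub> (Gam n)) \<and> (\<forall>n. x (Suc n) \<subseteq> x n)}"

definition invlim_top :: "('a, 'c) monoid_scheme \<Rightarrow> (nat \<Rightarrow> 'a set) \<Rightarrow> (nat \<Rightarrow> 'a set) topology" where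
  "invlim_top G Gam =
     subtopology (product_topology (\<lambda>n. discrete_topology (rcosets\<^bsub>G\<^esub> (Gam n))) UNIV)
                 (invlim G Gam)"

definition invlim_act :: "('a, 'c) monoid_scheme \<Rightarrow> 'a \<Rightarrow> (nat \<Rightarrow> 'a set) \<Rightarrow> (nat \<Rightarrow> 'a set)" where
  "invlim_act G g x = (\<lambda>n. g <#\<^bsub>G\<^esub> x n)"

text \<open>The identity point e of X is the sequence of trivial cosets, i.e. Gam itself.
  The quotient map pi_n is evaluation at n.  Indexing: Isabelle index n corresponds to
  the paper's index n+1, so the paper's C_n (n >= 2) is Cset ... n with n >= 1.\<close>
definition Cset :: "('a, 'c) monoid_scheme \<Rightarrow> (nat \<Rightarrow> 'a set) \<Rightarrow> (nat \<Rightarrow> 'a) \<Rightarrow> nat \<Rightarrow> (nat \<Rightarrow> 'a set) set" where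
  "Cset G Gam \<gamma> n = {x \<in> invlim G Gam. x n = Gam n #>\<^bsub>G\<^esub> \<gamma> n}"

definition Xplus :: "('a, 'c) monoid_scheme \<Rightarrow> (nat \<Rightarrow> 'a set) \<Rightarrow> (nat \<Rightarrow> 'a) \<Rightarrow> (nat \<Rightarrow> 'a set) set" where
  "Xplus G Gam \<gamma> = (\<Union>n\<in>{1..}. Cset G Gam \<gamma> n)"

text \<open>f = 1 on X_+ and -1 on X_- (its value at e is irrelevant, it is never used).\<close>
definition fsign :: "('a, 'c) monoid_scheme \<Rightarrow> (nat \<Rightarrow> 'a set) \<Rightarrow> (nat \<Rightarrow> 'a) \<Rightarrow> (nat \<Rightarrow> 'a set) \<Rightarrow> real" where
  "fsign G Gam \<gamma> x = (if x \<in> Xplus G Gam \<gamma> then 1 else -1)"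

definition continuous_action :: "('a, 'c) monoid_scheme \<Rightarrow> 'b topology \<Rightarrow> ('a \<Rightarrow> 'b \<Rightarrow> 'b) \<Rightarrow> bool" where
  "continuous_action G Y T \<longleftrightarrow>
     (\<forall>g \<in> carrier G. continuous_map Y Y (T g)) \<and>
     (\<forall>y \<in> topspace Y. T \<one>\<^bsub>G\<^esub> y = y) \<and>
     (\<forall>g \<in> carrier G. \<forall>h \<in> carrier G. \<forall>y \<in> topspace Y. T (g \<otimes>\<^bsub>G\<^esub> h) y = T g (T h y))"

definition minimal_action :: "('a, 'c) monoid_scheme \<Rightarrow> 'b topology \<Rightarrow> ('a \<Rightarrow> 'b \<Rightarrow> 'b) \<Rightarrow> bool" where
  "minimal_action G Y T \<longleftrightarrow>
     (\<forall>A. closedin Y A \<and> (\<forall>g \<in> carrier G. T g ` A \<subseteq> A) \<longrightarrow> A = {} \<or> A = topspace Y)"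

definition is_McMahon_extension ::
  "('a, 'c) monoid_scheme \<Rightarrow> 'x topology \<Rightarrow> ('a \<Rightarrow> 'x \<Rightarrow> 'x) \<Rightarrow> 'x \<Rightarrow> ('x \<Rightarrow> real)
     \<Rightarrow> 'b topology \<Rightarrow> ('a \<Rightarrow> 'b \<Rightarrow> 'b) \<Rightarrow> ('b \<Rightarrow> 'x) \<Rightarrow> bool" where
  "is_McMahon_extension G XT Tx e f Y T p \<longleftrightarrow>
     compact_space Y \<and> metrizable_space Y \<and>
     continuous_action G Y T \<and> minimal_action G Y T \<and>
     continuous_map Y XT p \<and> p ` topspace Y = topspace XT \<and>
     (\<forall>g \<in> carrier G. \<forall>y \<in> topspace Y. p (T g y) = Tx g (p y)) \<and>
     (\<forall>x \<in> topspace XT. x \<notin> {Tx g e | g. g \<in> carrier G} \<longrightarrow> card {y \<in> topspace Y. p y = x} = 1) \<and>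
     (\<forall>x \<in> {Tx g e | g. g \<in> carrier G}. card {y \<in> topspace Y. p y = x} = 2) \<and>
     (\<exists>F. continuous_map Y euclideanreal F \<and>
          (\<forall>y \<in> topspace Y. p y \<noteq> e \<longrightarrow> F y = f (p y)))"

definition cover_join :: "('a, 'c) monoid_scheme \<Rightarrow> ('a \<Rightarrow> 'b \<Rightarrow> 'b) \<Rightarrow> (nat \<Rightarrow> 'a) \<Rightarrow> 'b set set \<Rightarrow> nat \<Rightarrow> 'b set set" where
  "cover_join G T s \<U> n =
     {\<Inter>i\<in>{1..n}. V i | V. \<forall>i\<in>{1..n}. V i \<in> (\<lambda>U. T (inv\<^bsub>G\<^esub> (s i)) ` U) ` \<U>}"

definition min_subcover :: "'b topology \<Rightarrow> 'b set set \<Rightarrow> nat" where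
  "min_subcover Y \<V> = (LEAST k. \<exists>\<W> \<subseteq> \<V>. finite \<W> \<and> card \<W> = k \<and> topspace Y \<subseteq> \<Union>\<W>)"

definition null_action :: "('a, 'c) monoid_scheme \<Rightarrow> 'b topology \<Rightarrow> ('a \<Rightarrow> 'b \<Rightarrow> 'b) \<Rightarrow> bool" where
  "null_action G Y T \<longleftrightarrow>
     (\<forall>s \<U>. (\<forall>n. s n \<in> carrier G) \<and> finite \<U> \<and> (\<forall>U \<in> \<U>. openin Y U) \<and> \<Union>\<U> = topspace Y \<longrightarrow>
        limsup (\<lambda>n. ereal (ln (real (min_subcover Y (cover_join G T s \<U> n))) / real n)) = 0)"

end

theory Submission
  imports Defs "HOL-Real_Asymp.Real_Asymp"
begin

locale rfs = group G for G :: "('a, 'c) monoid_scheme" (structure) +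
  fixes Gam :: "nat \<Rightarrow> 'a set" and \<gamma> :: "nat \<Rightarrow> 'a"
  assumes nrm: "\<And>n. Gam n \<lhd> G"
    and dec: "\<And>n. Gam (Suc n) \<subseteq> Gam n"
    and int1: "(\<Inter>n. Gam n) = {\<one>}"
    and gam: "\<And>n. n \<ge> 1 \<Longrightarrow> \<gamma> n \<in> Gam (n - 1) - Gam n"
    and idx: "\<And>n. card {Gam (Suc n) #> g | g. g \<in> Gam n} > 2"
begin

definition pt :: "'a \<Rightarrow> nat \<Rightarrow> 'a set" where "pt a = (\<lambda>n. Gam n #> a)"

lemma cancel1: "a \<in> carrier G \<Longrightarrow> b \<in> carrier G \<Longrightarrow> inv a \<otimes> (a \<otimes> b) = b"
  by (simp add: m_assoc[of "inv a" a b, symmetric])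

lemma cancel2: "a \<in> carrier G \<Longrightarrow> b \<in> carrier G \<Longrightarrow> a \<otimes> (inv a \<otimes> b) = b"
  by (simp add: m_assoc[of a "inv a" b, symmetric])

lemma cancel3: "u \<in> carrier G \<Longrightarrow> b \<in> carrier G \<Longrightarrow> (u \<otimes> inv b) \<otimes> b = u"
  by (simp add: m_assoc[of u "inv b" b])

lemma conj_back: "b \<in> carrier G \<Longrightarrow> c \<in> carrier G \<Longrightarrow> inv b \<otimes> ((b \<otimes> c) \<otimes> inv b) \<otimes> inv (inv b) = c"
proof -
  assume b: "b \<in> carrier G" and c: "c \<in> carrier G"
  have bc: "b \<otimes> c \<in> carrier G" using b c by simp
  have "inv b \<otimes> ((b \<otimes> c) \<otimes> inv b) \<otimes> b = inv b \<otimes> (((b \<otimes> c) \<otimes> inv b) \<otimes> b)"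
    using m_assoc[of "inv b" "(b \<otimes> c) \<otimes> inv b" b] b c by simp
  also have "\<dots> = inv b \<otimes> (b \<otimes> c)" using cancel3[OF bc b] by simp
  also have "\<dots> = c" using cancel1[OF b c] .
  finally show ?thesis using b by simp
qed

lemma sub: "subgroup (Gam n) G"
  using nrm normal_imp_subgroup by blast

lemma subc: "Gam n \<subseteq> carrier G"
  using sub subgroup.subset by blast

lemma mono: "m \<le> n \<Longrightarrow> Gam n \<subseteq> Gam m"
  by (induction n rule: dec_induct) (use dec in auto)

lemma gam_c: "n \<ge> 1 \<Longrightarrow> \<gamma> n \<in> carrier G"
  using gam subc by blast

lemma ceq: "a \<in> carrier G \<Longrightarrow> b \<in> carrier G \<Longrightarrow> (Gam n #> a = Gam n #> b) \<longleftrightarrow> a \<otimes> inv b \<in> Gam n"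
proof
  assume a: "a \<in> carrier G" and b: "b \<in> carrier G"
  { assume "Gam n #> a = Gam n #> b"
    then have "a \<in> Gam n #> b" using rcos_self[OF a sub[of n]] by simp
    then show "a \<otimes> inv b \<in> Gam n" using subgroup.rcos_module_imp[OF sub is_group b] by blast }
  { assume "a \<otimes> inv b \<in> Gam n"
    then have "a \<in> Gam n #> b" using subgroup.rcos_module_rev[OF sub is_group b a] by blast
    then show "Gam n #> a = Gam n #> b" using repr_independence[OF _ b sub] by simp }
qed

lemma ceq_one: "a \<in> carrier G \<Longrightarrow> (Gam n #> a = Gam n) \<longleftrightarrow> a \<in> Gam n"
proof
  assume a: "a \<in> carrier G"
  { assume "Gam n #> a = Gam n" then show "a \<in> Gam n" using coset_join1[OF _ a sub] by simp }
  { assume "a \<in> Gam n" then show "Gam n #> a = Gam n" using coset_join2[OF a sub] by simp }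
qed

lemma cdown: "m \<le> n \<Longrightarrow> a \<in> carrier G \<Longrightarrow> b \<in> carrier G \<Longrightarrow> Gam n #> a = Gam n #> b \<Longrightarrow> Gam m #> a = Gam m #> b"
proof -
  assume mn: "m \<le> n" and a: "a \<in> carrier G" and b: "b \<in> carrier G" and e: "Gam n #> a = Gam n #> b"
  have "a \<otimes> inv b \<in> Gam n" using e ceq[OF a b] by simp
  then have "a \<otimes> inv b \<in> Gam m" using mono[OF mn] by blast
  then show ?thesis using ceq[OF a b] by simp
qed

lemma lcos: "g \<in> carrier G \<Longrightarrow> a \<in> carrier G \<Longrightarrow> g <# (Gam n #> a) = Gam n #> (g \<otimes> a)"
proof -
  assume g: "g \<in> carrier G" and a: "a \<in> carrier G"
  have "g <# (Gam n #> a) = (g <# Gam n) #> a" using coset_assoc[OF g a subc] .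
  also have "g <# Gam n = Gam n #> g" using normal.coset_eq[OF nrm] g by simp
  also have "(Gam n #> g) #> a = Gam n #> (g \<otimes> a)" using coset_mult_assoc[OF subc g a] .
  finally show ?thesis .
qed

lemma rcosets_iff: "R \<in> rcosets (Gam n) \<longleftrightarrow> (\<exists>a\<in>carrier G. R = Gam n #> a)"
  unfolding RCOSETS_def by auto

lemma invlimD: "x \<in> invlim G Gam \<Longrightarrow> \<exists>a\<in>carrier G. x n = Gam n #> a"
  unfolding invlim_def using rcosets_iff by blast

lemma invlim_sub: assumes "x \<in> invlim G Gam" "m \<le> n" shows "x n \<subseteq> x m"
  using assms(2)
proof (induction n rule: dec_induct)
  case base show ?case by simp
next
  case (step k) then show ?case using assms(1) unfolding invlim_def by blast
qed

lemma cos_determ: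
  assumes x: "x \<in> invlim G Gam" and mn: "m \<le> n" and a: "a \<in> carrier G" and xn: "x n = Gam n #> a"
  shows "x m = Gam m #> a"
proof -
  obtain b where b: "b \<in> carrier G" "x m = Gam m #> b" using invlimD[OF x] by blast
  have "a \<in> x n" using xn rcos_self[OF a sub] by simp
  then have "a \<in> Gam m #> b" using invlim_sub[OF x mn] b by auto
  then show ?thesis using repr_independence[OF _ b(1) sub] b by simp
qed

lemma pt_in: "a \<in> carrier G \<Longrightarrow> pt a \<in> invlim G Gam"
  unfolding invlim_def pt_def
proof (intro CollectI conjI allI)
  fix n assume a: "a \<in> carrier G"
  show "Gam n #> a \<in> rcosets (Gam n)" using rcosetsI[OF subc a] .
  show "Gam (Suc n) #> a \<subseteq> Gam n #> a" using dec unfolding r_coset_def by auto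
qed

lemma pt_one: "pt \<one> = Gam"
  unfolding pt_def using coset_mult_one[OF subc] by auto

lemma act_in: "g \<in> carrier G \<Longrightarrow> x \<in> invlim G Gam \<Longrightarrow> invlim_act G g x \<in> invlim G Gam"
proof -
  assume g: "g \<in> carrier G" and x: "x \<in> invlim G Gam"
  show ?thesis unfolding invlim_def invlim_act_def
  proof (intro CollectI conjI allI)
    fix n
    obtain a where a: "a \<in> carrier G" "x n = Gam n #> a" using invlimD[OF x] by blast
    show "g <# x n \<in> rcosets (Gam n)" using a lcos[OF g a(1)] rcosetsI[OF subc m_closed[OF g a(1)]] by simp
    show "g <# x (Suc n) \<subseteq> g <# x n" using x unfolding invlim_def l_coset_def by auto
  qed
qed

lemma act_n: "g \<in> carrier G \<Longrightarrow> a \<in> carrier G \<Longrightarrow> x n = Gam n #> a \<Longrightarrow> invlim_act G g x n = Gam n #> (g \<otimes> a)"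
  unfolding invlim_act_def using lcos by simp

lemma act_pt: "g \<in> carrier G \<Longrightarrow> a \<in> carrier G \<Longrightarrow> invlim_act G g (pt a) = pt (g \<otimes> a)"
  unfolding invlim_act_def pt_def using lcos by auto

lemma act_inv: "g \<in> carrier G \<Longrightarrow> x \<in> invlim G Gam \<Longrightarrow> invlim_act G (inv g) (invlim_act G g x) = x"
proof (rule ext)
  fix n assume g: "g \<in> carrier G" and x: "x \<in> invlim G Gam"
  obtain a where a: "a \<in> carrier G" "x n = Gam n #> a" using invlimD[OF x] by blast
  have "invlim_act G (inv g) (invlim_act G g x) n = Gam n #> (inv g \<otimes> (g \<otimes> a))"
    using act_n[of "inv g" "g \<otimes> a" "invlim_act G g x" n] act_n[of g a x n] g a by simp
  also have "inv g \<otimes> (g \<otimes> a) = a" using cancel1 g a(1) by simp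
  finally show "invlim_act G (inv g) (invlim_act G g x) n = x n" using a by simp
qed

lemma pt_inj: "a \<in> carrier G \<Longrightarrow> b \<in> carrier G \<Longrightarrow> pt a = pt b \<Longrightarrow> a = b"
proof -
  assume a: "a \<in> carrier G" and b: "b \<in> carrier G" and e: "pt a = pt b"
  have "\<forall>n. a \<otimes> inv b \<in> Gam n" using e ceq[OF a b] unfolding pt_def by metis
  then have "a \<otimes> inv b = \<one>" using int1 by blast
  then show "a = b" using a b by (metis inv_equality inv_inv inv_closed)
qed

lemma plus_level:
  assumes x: "x \<in> invlim G Gam" and b: "b \<in> carrier G" and n: "n \<ge> 1"
    and xn: "x n = Gam n #> (b \<otimes> \<gamma> n)"
  shows "x (n - 1) = Gam (n - 1) #> b" "x n \<noteq> Gam n #> b"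
proof -
  have gc: "\<gamma> n \<in> carrier G" using gam_c[OF n] .
  have bg: "b \<otimes> \<gamma> n \<in> carrier G" using b gc by simp
  have "x (n - 1) = Gam (n - 1) #> (b \<otimes> \<gamma> n)" using cos_determ[OF x _ bg xn] by simp
  moreover have "(b \<otimes> \<gamma> n) \<otimes> inv b \<in> Gam (n - 1)"
    using normal.inv_op_closed2[OF nrm b] gam[OF n] by simp
  ultimately show "x (n - 1) = Gam (n - 1) #> b" using ceq[OF bg b] by simp
  show "x n \<noteq> Gam n #> b"
  proof
    assume "x n = Gam n #> b"
    then have "(b \<otimes> \<gamma> n) \<otimes> inv b \<in> Gam n" using ceq[OF bg b] xn by simp
    then have "inv b \<otimes> ((b \<otimes> \<gamma> n) \<otimes> inv b) \<otimes> inv (inv b) \<in> Gam n"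
      using normal.inv_op_closed2[OF nrm inv_closed[OF b]] by blast
    also have "inv b \<otimes> ((b \<otimes> \<gamma> n) \<otimes> inv b) \<otimes> inv (inv b) = \<gamma> n"
      using conj_back[OF b gc] .
    finally show False using gam[OF n] by simp
  qed
qed


lemma rcancel:
  assumes a: "a \<in> carrier G" and b: "b \<in> carrier G" and c: "c \<in> carrier G"
  shows "(Gam n #> (a \<otimes> c) = Gam n #> (b \<otimes> c)) \<longleftrightarrow> (Gam n #> a = Gam n #> b)"
proof -
  have e: "\<And>u. u \<in> carrier G \<Longrightarrow> Gam n #> (u \<otimes> c) = (Gam n #> u) #> c"
    using coset_mult_assoc[OF subc _ c] by simp
  have f: "\<And>u. u \<in> carrier G \<Longrightarrow> ((Gam n #> u) #> c) #> inv c = Gam n #> u"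
  proof -
    fix u assume u: "u \<in> carrier G"
    have s: "Gam n #> u \<subseteq> carrier G" using r_coset_subset_G[OF subc u] .
    have "((Gam n #> u) #> c) #> inv c = (Gam n #> u) #> (c \<otimes> inv c)"
      using coset_mult_assoc[OF s c inv_closed[OF c]] .
    also have "\<dots> = Gam n #> u" using c s by simp
    finally show "((Gam n #> u) #> c) #> inv c = Gam n #> u" .
  qed
  show ?thesis using e[OF a] e[OF b] f[OF a] f[OF b] by metis
qed

definition ag :: "(nat \<Rightarrow> 'a set) \<Rightarrow> 'a \<Rightarrow> nat \<Rightarrow> bool" where
  "ag x b n \<longleftrightarrow> x n = Gam n #> b"

lemma ag_down: "x \<in> invlim G Gam \<Longrightarrow> b \<in> carrier G \<Longrightarrow> ag x b n \<Longrightarrow> m \<le> n \<Longrightarrow> ag x b m"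
  unfolding ag_def using cos_determ by blast

definition case1 :: "'a set \<Rightarrow> (nat \<Rightarrow> 'a set) \<Rightarrow> bool" where
  "case1 S x \<longleftrightarrow> (\<exists>g\<in>S. \<forall>n. ag x (inv g) n)"
definition DD :: "'a set \<Rightarrow> (nat \<Rightarrow> 'a set) \<Rightarrow> nat" where
  "DD S x = (LEAST n. \<forall>g\<in>S. \<not> ag x (inv g) n)"
definition AA :: "'a set \<Rightarrow> (nat \<Rightarrow> 'a set) \<Rightarrow> 'a set" where
  "AA S x = {g\<in>S. \<forall>n<DD S x. ag x (inv g) n}"
definition BB :: "'a set \<Rightarrow> (nat \<Rightarrow> 'a set) \<Rightarrow> 'a set" where
  "BB S x = {g\<in>AA S x. DD S x \<ge> 1 \<and> x (DD S x) = Gam (DD S x) #> (inv g \<otimes> \<gamma> (DD S x))}"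
definition sig :: "'a set \<Rightarrow> 'a set \<Rightarrow> 'a \<Rightarrow> bool" where
  "sig A B g = (if g \<in> A then g \<in> B else (\<exists>n\<ge>1. Gam n #> inv (SOME h. h \<in> A) = Gam n #> (inv g \<otimes> \<gamma> n)))"
definition cls :: "'a set \<Rightarrow> 'a \<Rightarrow> nat \<Rightarrow> 'a set" where
  "cls S h k = {g\<in>S. \<forall>n<k. Gam n #> inv g = Gam n #> inv h}"

lemma DD_ex:
  assumes S: "finite S" "S \<subseteq> carrier G" and x: "x \<in> invlim G Gam" and nc: "\<not> case1 S x"
  shows "\<exists>N. \<forall>g\<in>S. \<not> ag x (inv g) N"
proof -
  have "\<forall>g\<in>S. \<exists>n. \<not> ag x (inv g) n" using nc unfolding case1_def by blast
  then obtain nf where nf: "\<forall>g\<in>S. \<not> ag x (inv g) (nf g)" by metis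
  define N where "N = Max (insert 0 (nf ` S))"
  have le: "\<forall>g\<in>S. nf g \<le> N" unfolding N_def using S(1) by simp
  have "\<forall>g\<in>S. \<not> ag x (inv g) N"
  proof
    fix g assume g: "g \<in> S"
    have "inv g \<in> carrier G" using g S(2) by auto
    then show "\<not> ag x (inv g) N" using ag_down[OF x, of "inv g" N "nf g"] nf le g by blast
  qed
  then show ?thesis by blast
qed

lemma DD_fail:
  assumes "finite S" "S \<subseteq> carrier G" "x \<in> invlim G Gam" "\<not> case1 S x"
  shows "\<forall>g\<in>S. \<not> ag x (inv g) (DD S x)"
  using LeastI_ex[OF DD_ex[OF assms]] unfolding DD_def .

lemma DD_before: "n < DD S x \<Longrightarrow> \<exists>g\<in>S. ag x (inv g) n"
  unfolding DD_def using not_less_Least by blast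

lemma AA_ne:
  assumes S: "finite S" "S \<subseteq> carrier G" and x: "x \<in> invlim G Gam" and "DD S x \<ge> 1"
  shows "\<exists>h. h \<in> AA S x"
proof -
  obtain h where h: "h \<in> S" "ag x (inv h) (DD S x - 1)" using DD_before[of "DD S x - 1" S x] assms(4) by auto
  have "inv h \<in> carrier G" using h S by auto
  then have "\<forall>n<DD S x. ag x (inv h) n" using ag_down[OF x _ h(2)] by auto
  then show ?thesis using h unfolding AA_def by blast
qed

lemma Xplus_iff: "y \<in> invlim G Gam \<Longrightarrow> y \<in> Xplus G Gam \<gamma> \<longleftrightarrow> (\<exists>n\<ge>1. y n = Gam n #> \<gamma> n)"
  unfolding Xplus_def Cset_def by auto

lemma act_plus_iff:
  assumes g: "g \<in> carrier G" and x: "x \<in> invlim G Gam" and n: "n \<ge> 1"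
  shows "(invlim_act G g x n = Gam n #> \<gamma> n) \<longleftrightarrow> (x n = Gam n #> (inv g \<otimes> \<gamma> n))"
proof
  have gc: "\<gamma> n \<in> carrier G" using gam_c[OF n] .
  { assume "invlim_act G g x n = Gam n #> \<gamma> n"
    then have "invlim_act G (inv g) (invlim_act G g x) n = Gam n #> (inv g \<otimes> \<gamma> n)"
      using act_n[of "inv g" "\<gamma> n" "invlim_act G g x" n] g gc by simp
    then show "x n = Gam n #> (inv g \<otimes> \<gamma> n)" using act_inv[OF g x] by simp }
  { assume "x n = Gam n #> (inv g \<otimes> \<gamma> n)"
    then have "invlim_act G g x n = Gam n #> (g \<otimes> (inv g \<otimes> \<gamma> n))"
      using act_n[of g "inv g \<otimes> \<gamma> n" x n] g gc by simp
    also have "g \<otimes> (inv g \<otimes> \<gamma> n) = \<gamma> n" using cancel2 g gc by simp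
    finally show "invlim_act G g x n = Gam n #> \<gamma> n" . }
qed

lemma sign_char:
  assumes S: "finite S" "S \<subseteq> carrier G" and x: "x \<in> invlim G Gam" and nc: "\<not> case1 S x" and g: "g \<in> S"
  shows "invlim_act G g x \<in> Xplus G Gam \<gamma> \<longleftrightarrow> sig (AA S x) (BB S x) g"
proof -
  have gc: "g \<in> carrier G" using g S by auto
  have igc: "inv g \<in> carrier G" using gc by simp
  let ?D = "DD S x"
  have fail: "\<forall>g\<in>S. \<not> ag x (inv g) ?D" using DD_fail[OF S x nc] .
  have "invlim_act G g x \<in> Xplus G Gam \<gamma> \<longleftrightarrow> (\<exists>n\<ge>1. x n = Gam n #> (inv g \<otimes> \<gamma> n))"
    using Xplus_iff[OF act_in[OF gc x]] act_plus_iff[OF gc x] by auto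
  also have "\<dots> \<longleftrightarrow> sig (AA S x) (BB S x) g"
  proof (cases "g \<in> AA S x")
    case True
    have agA: "\<forall>n<?D. ag x (inv g) n" using True unfolding AA_def by auto
    have "(\<exists>n\<ge>1. x n = Gam n #> (inv g \<otimes> \<gamma> n)) \<longleftrightarrow> g \<in> BB S x"
    proof
      assume "\<exists>n\<ge>1. x n = Gam n #> (inv g \<otimes> \<gamma> n)"
      then obtain n where n: "n \<ge> 1" "x n = Gam n #> (inv g \<otimes> \<gamma> n)" by blast
      have p1: "ag x (inv g) (n - 1)" "\<not> ag x (inv g) n"
        using plus_level[OF x igc n] unfolding ag_def by auto
      have "\<not> n < ?D" using p1(2) agA by blast
      moreover have "\<not> n - 1 \<ge> ?D" using p1(1) fail g ag_down[OF x igc] by blast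
      ultimately have "n = ?D" by linarith
      then show "g \<in> BB S x" using True n unfolding BB_def by auto
    next
      assume "g \<in> BB S x" then show "\<exists>n\<ge>1. x n = Gam n #> (inv g \<otimes> \<gamma> n)" unfolding BB_def by auto
    qed
    then show ?thesis using True unfolding sig_def by simp
  next
    case False
    obtain n0 where n0: "n0 < ?D" "\<not> ag x (inv g) n0" using False g unfolding AA_def by auto
    have ne: "\<exists>h. h \<in> AA S x" using AA_ne[OF S x] n0(1) by simp
    define h where "h = (SOME h. h \<in> AA S x)"
    have hA: "h \<in> AA S x" using ne someI_ex h_def by metis
    have hc: "inv h \<in> carrier G" using hA S unfolding AA_def by auto
    have agh: "\<forall>n<?D. x n = Gam n #> inv h" using hA unfolding AA_def ag_def by auto
    have "(\<exists>n\<ge>1. x n = Gam n #> (inv g \<otimes> \<gamma> n)) \<longleftrightarrow> (\<exists>n\<ge>1. Gam n #> inv h = Gam n #> (inv g \<otimes> \<gamma> n))"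
    proof
      assume "\<exists>n\<ge>1. x n = Gam n #> (inv g \<otimes> \<gamma> n)"
      then obtain n where n: "n \<ge> 1" "x n = Gam n #> (inv g \<otimes> \<gamma> n)" by blast
      have "ag x (inv g) (n - 1)" using plus_level(1)[OF x igc n] unfolding ag_def .
      then have "\<not> n - 1 \<ge> n0" using n0(2) ag_down[OF x igc] by blast
      then have "n < ?D" using n0(1) n(1) by linarith
      then show "\<exists>n\<ge>1. Gam n #> inv h = Gam n #> (inv g \<otimes> \<gamma> n)" using n agh by metis
    next
      assume "\<exists>n\<ge>1. Gam n #> inv h = Gam n #> (inv g \<otimes> \<gamma> n)"
      then obtain n where n: "n \<ge> 1" "Gam n #> inv h = Gam n #> (inv g \<otimes> \<gamma> n)" by blast
      have pn: "pt (inv h) n = Gam n #> (inv g \<otimes> \<gamma> n)" using n(2) unfolding pt_def by simp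
      have hg: "Gam (n - 1) #> inv h = Gam (n - 1) #> inv g"
        using plus_level(1)[OF pt_in[OF hc] igc n(1) pn] unfolding pt_def by simp
      have "\<not> n - 1 \<ge> n0"
      proof
        assume "n0 \<le> n - 1"
        then have "Gam n0 #> inv h = Gam n0 #> inv g" using cdown[OF _ hc igc hg] by blast
        then have "ag x (inv g) n0" using agh n0(1) unfolding ag_def by simp
        then show False using n0(2) by simp
      qed
      then have "n < ?D" using n0(1) n(1) by linarith
      then show "\<exists>n\<ge>1. x n = Gam n #> (inv g \<otimes> \<gamma> n)" using n agh by metis
    qed
    then show ?thesis using False unfolding sig_def h_def by simp
  qed
  finally show ?thesis .
qed

lemma nc_act_ne:
  assumes x: "x \<in> invlim G Gam" and nc: "\<not> case1 S x" and g: "g \<in> S" and S: "S \<subseteq> carrier G"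
  shows "invlim_act G g x \<noteq> Gam"
proof
  assume e: "invlim_act G g x = Gam"
  have gc: "g \<in> carrier G" using g S by auto
  have "x = invlim_act G (inv g) (pt \<one>)" using act_inv[OF gc x] e pt_one by simp
  also have "\<dots> = pt (inv g)" using act_pt[of "inv g" \<one>] gc by simp
  finally have "\<forall>n. ag x (inv g) n" unfolding ag_def pt_def by simp
  then show False using nc g unfolding case1_def by blast
qed

lemma case1_pt:
  assumes x: "x \<in> invlim G Gam" and c: "\<forall>n. ag x (inv g0) n"
  shows "x = pt (inv g0)"
  using c unfolding ag_def pt_def by auto

lemma case1_act_ne:
  assumes g0: "g0 \<in> carrier G" and g: "g \<in> carrier G" and ne: "g \<noteq> g0"
  shows "invlim_act G g (pt (inv g0)) \<noteq> Gam"
proof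
  assume "invlim_act G g (pt (inv g0)) = Gam"
  then have "pt (g \<otimes> inv g0) = pt \<one>" using act_pt[of g "inv g0"] g g0 pt_one by simp
  then have "g \<otimes> inv g0 = \<one>" using pt_inj g g0 by simp
  then have "inv (inv g0) = g" using inv_equality[of g "inv g0"] g g0 by simp
  then show False using ne g0 by simp
qed

lemma AA_cls:
  assumes S: "S \<subseteq> carrier G" and x: "x \<in> invlim G Gam" and h: "h \<in> AA S x"
  shows "AA S x = cls S h (DD S x)"
proof -
  have agh: "\<forall>n<DD S x. x n = Gam n #> inv h" using h unfolding AA_def ag_def by auto
  show ?thesis unfolding AA_def cls_def ag_def using agh by auto
qed

lemma BB_cls:
  assumes S: "S \<subseteq> carrier G" and x: "x \<in> invlim G Gam" and h: "h \<in> BB S x"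
  shows "BB S x = cls S h (Suc (DD S x))"
proof -
  let ?D = "DD S x"
  have hS: "h \<in> S" and hA: "h \<in> AA S x" using h unfolding BB_def AA_def by auto
  have D1: "?D \<ge> 1" and xD: "x ?D = Gam ?D #> (inv h \<otimes> \<gamma> ?D)" using h unfolding BB_def by auto
  have gcD: "\<gamma> ?D \<in> carrier G" using gam_c[OF D1] .
  have hc: "inv h \<in> carrier G" using hS S by auto
  have A: "AA S x = cls S h ?D" using AA_cls[OF S x hA] .
  have rc: "(Gam ?D #> (inv h \<otimes> \<gamma> ?D) = Gam ?D #> (inv g \<otimes> \<gamma> ?D)) \<longleftrightarrow> (Gam ?D #> inv g = Gam ?D #> inv h)"
    if "g \<in> S" for g
  proof -
    have gi: "inv g \<in> carrier G" using that S by auto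
    have "(Gam ?D #> (inv h \<otimes> \<gamma> ?D) = Gam ?D #> (inv g \<otimes> \<gamma> ?D)) \<longleftrightarrow> (Gam ?D #> inv h = Gam ?D #> inv g)"
      using rcancel[OF hc gi gcD] .
    also have "\<dots> \<longleftrightarrow> (Gam ?D #> inv g = Gam ?D #> inv h)" by (rule eq_commute)
    finally show ?thesis .
  qed
  have lsuc: "(\<forall>n<Suc ?D. P n) \<longleftrightarrow> (\<forall>n<?D. P n) \<and> P ?D" for P by (auto simp: less_Suc_eq)
  have key: "(\<forall>n<Suc ?D. Gam n #> inv g = Gam n #> inv h) \<longleftrightarrow>
      ((\<forall>n<?D. Gam n #> inv g = Gam n #> inv h) \<and> x ?D = Gam ?D #> (inv g \<otimes> \<gamma> ?D))" if "g \<in> S" for g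
  proof -
    have "(\<forall>n<Suc ?D. Gam n #> inv g = Gam n #> inv h) \<longleftrightarrow>
      ((\<forall>n<?D. Gam n #> inv g = Gam n #> inv h) \<and> Gam ?D #> inv g = Gam ?D #> inv h)"
      by (rule lsuc)
    then show ?thesis using rc[OF that] xD by (simp only:)
  qed
  have "g \<in> BB S x \<longleftrightarrow> g \<in> cls S h (Suc ?D)" for g
    proof (cases "g \<in> S")
      case True
      have "g \<in> BB S x \<longleftrightarrow> g \<in> AA S x \<and> x ?D = Gam ?D #> (inv g \<otimes> \<gamma> ?D)"
        using D1 by (simp add: BB_def)
      also have "\<dots> \<longleftrightarrow> (\<forall>n<?D. Gam n #> inv g = Gam n #> inv h) \<and> x ?D = Gam ?D #> (inv g \<otimes> \<gamma> ?D)"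
        using True by (simp add: A cls_def)
      also have "\<dots> \<longleftrightarrow> (\<forall>n<Suc ?D. Gam n #> inv g = Gam n #> inv h)" using key[OF True] by blast
      finally show ?thesis using True by (simp add: cls_def)
    next
      case False then show ?thesis by (simp add: BB_def AA_def cls_def)
    qed
  then show ?thesis by blast
qed

lemma card_chain:
  fixes f :: "nat \<Rightarrow> 'b set"
  assumes S: "finite S" and sub: "\<And>k. f k \<subseteq> S" and anti: "\<And>k k'. k \<le> k' \<Longrightarrow> f k' \<subseteq> f k"
  shows "card (range f) \<le> card S + 1"
proof -
  have inj: "inj_on card (range f)"
  proof (rule inj_onI)
    fix A B assume A: "A \<in> range f" and B: "B \<in> range f" and c: "card A = card B"
    obtain k k' where k: "A = f k" "B = f k'" using A B by blast
    have fA: "finite A" "finite B" using k sub S finite_subset by metis+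
    show "A = B"
    proof (cases "k \<le> k'")
      case True then have "B \<subseteq> A" using anti k by blast
      then show ?thesis using card_subset_eq[OF fA(1)] c by metis
    next
      case False then have "k' \<le> k" by simp
      then have "A \<subseteq> B" using anti[of k' k] k by simp
      then show ?thesis using card_subset_eq[OF fA(2)] c by metis
    qed
  qed
  have "card ` range f \<subseteq> {0..card S}" using card_mono[OF S sub] by auto
  then have "card (card ` range f) \<le> card {0..card S}" by (rule card_mono[rotated]) simp
  then have "card (card ` range f) \<le> card S + 1" by simp
  then show ?thesis using card_image[OF inj] by simp
qed

definition LL :: "'a set \<Rightarrow> 'a set set" where
  "LL S = (\<Union>h\<in>S. range (cls S h)) \<union> {{}}"

lemma card_LL:
  assumes S: "finite S"
  shows "card (LL S) \<le> card S * (card S + 1) + 1" "finite (LL S)"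
proof -
  have ch: "\<And>h. card (range (cls S h)) \<le> card S + 1"
    by (rule card_chain[OF S]) (auto simp: cls_def)
  have fin: "\<And>h. finite (range (cls S h))"
  proof -
    fix h have "range (cls S h) \<subseteq> Pow S" by (auto simp: cls_def)
    then show "finite (range (cls S h))" using S finite_subset by blast
  qed
  have "card (\<Union>h\<in>S. range (cls S h)) \<le> (\<Sum>h\<in>S. card (range (cls S h)))"
    using card_UN_le[OF S] by blast
  also have "\<dots> \<le> card S * (card S + 1)" using sum_bounded_above[of S "\<lambda>h. card (range (cls S h))" "card S + 1"] ch by simp
  finally have "card (\<Union>h\<in>S. range (cls S h)) \<le> card S * (card S + 1)" .
  then show "card (LL S) \<le> card S * (card S + 1) + 1"
    unfolding LL_def using card_Un_le[of "\<Union>h\<in>S. range (cls S h)" "{{}}"] by simp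
  have "finite (\<Union>h\<in>S. range (cls S h))" using S fin by blast
  then show "finite (LL S)" unfolding LL_def by blast
qed

end

lemma refine:
  fixes \<phi> :: "'c \<Rightarrow> 'b \<Rightarrow> 'd"
  assumes cY: "compact_space Y"
    and lc: "\<And>c v. c \<in> Cs \<Longrightarrow> openin Y {y \<in> topspace Y. \<phi> c y = v}"
    and sep: "\<And>y1 y2. y1 \<in> topspace Y \<Longrightarrow> y2 \<in> topspace Y \<Longrightarrow> y1 \<noteq> y2 \<Longrightarrow> \<exists>c\<in>Cs. \<phi> c y1 \<noteq> \<phi> c y2"
    and Uo: "\<And>U. U \<in> \<U> \<Longrightarrow> openin Y U" and Ucov: "topspace Y \<subseteq> \<Union>\<U>"
  shows "\<exists>C. C \<subseteq> Cs \<and> finite C \<and> (\<forall>y\<in>topspace Y. \<exists>U\<in>\<U>. \<forall>y'\<in>topspace Y. (\<forall>c\<in>C. \<phi> c y' = \<phi> c y) \<longrightarrow> y' \<in> U)"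
proof -
  have ne: "openin Y {y \<in> topspace Y. \<phi> c y \<noteq> v}" if c: "c \<in> Cs" for c v
  proof -
    have "{y \<in> topspace Y. \<phi> c y \<noteq> v} = \<Union>((\<lambda>w. {y \<in> topspace Y. \<phi> c y = w}) ` {w. w \<noteq> v})" by auto
    moreover have "openin Y (\<Union>((\<lambda>w. {y \<in> topspace Y. \<phi> c y = w}) ` {w. w \<noteq> v}))"
      using lc[OF c] by (intro openin_Union) auto
    ultimately show ?thesis by simp
  qed
  have step1: "\<exists>U C. U \<in> \<U> \<and> C \<subseteq> Cs \<and> finite C \<and> (\<forall>y'\<in>topspace Y. (\<forall>c\<in>C. \<phi> c y' = \<phi> c y) \<longrightarrow> y' \<in> U)"
    if y: "y \<in> topspace Y" for y
  proof -
    obtain U where U: "U \<in> \<U>" "y \<in> U" using Ucov y by blast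
    define K where "K = topspace Y - U"
    have "closedin Y K" unfolding K_def using Uo[OF U(1)] by (intro closedin_diff) auto
    then have Kc: "compactin Y K" using closedin_compact_space[OF cY] by blast
    define Ob where "Ob c = {w \<in> topspace Y. \<phi> c w \<noteq> \<phi> c y}" for c
    have Kcov: "K \<subseteq> \<Union>(Ob ` Cs)"
    proof
      fix z assume z: "z \<in> K"
      then have "z \<in> topspace Y" "z \<noteq> y" using U(2) unfolding K_def by auto
      then obtain c where "c \<in> Cs" "\<phi> c z \<noteq> \<phi> c y" using sep[OF _ y] by metis
      then show "z \<in> \<Union>(Ob ` Cs)" unfolding Ob_def using \<open>z \<in> topspace Y\<close> by auto
    qed
    have Oo: "\<forall>u \<in> Ob ` Cs. openin Y u" unfolding Ob_def using ne by blast
    obtain FF where FF: "finite FF" "FF \<subseteq> Ob ` Cs" "K \<subseteq> \<Union>FF"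
      using Kc Oo Kcov unfolding compactin_def by meson
    obtain C where C: "C \<subseteq> Cs" "finite C" "FF = Ob ` C" using finite_subset_image[OF FF(1) FF(2)] by blast
    have "\<forall>y'\<in>topspace Y. (\<forall>c\<in>C. \<phi> c y' = \<phi> c y) \<longrightarrow> y' \<in> U"
    proof (intro ballI impI)
      fix y' assume y': "y' \<in> topspace Y" and ag: "\<forall>c\<in>C. \<phi> c y' = \<phi> c y"
      show "y' \<in> U"
      proof (rule ccontr)
        assume "y' \<notin> U"
        then have "y' \<in> K" using y' unfolding K_def by auto
        then obtain c where "c \<in> C" "y' \<in> Ob c" using FF(3) C(3) by auto
        then show False using ag unfolding Ob_def by auto
      qed
    qed
    then show ?thesis using U(1) C by blast
  qed
  then obtain Uf Cf where UC: "\<And>y. y \<in> topspace Y \<Longrightarrow> Uf y \<in> \<U> \<and> Cf y \<subseteq> Cs \<and> finite (Cf y) \<and>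
      (\<forall>y'\<in>topspace Y. (\<forall>c\<in>Cf y. \<phi> c y' = \<phi> c y) \<longrightarrow> y' \<in> Uf y)"
    by metis
  define W where "W y = {w \<in> topspace Y. \<forall>c\<in>Cf y. \<phi> c w = \<phi> c y}" for y
  have Wo: "openin Y (W y)" if y: "y \<in> topspace Y" for y
  proof -
    have "W y = (\<Inter>c \<in> Cf y. {w \<in> topspace Y. \<phi> c w = \<phi> c y}) \<inter> topspace Y" unfolding W_def by auto
    moreover have "openin Y ((\<Inter>c \<in> Cf y. {w \<in> topspace Y. \<phi> c w = \<phi> c y}) \<inter> topspace Y)"
      using UC[OF y] lc by (intro openin_INT) auto
    ultimately show ?thesis by simp
  qed
  have Wcov: "topspace Y \<subseteq> \<Union>(W ` topspace Y)" unfolding W_def by auto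
  obtain FF where FF: "finite FF" "FF \<subseteq> W ` topspace Y" "topspace Y \<subseteq> \<Union>FF"
    using cY Wcov Wo unfolding compact_space_alt by (metis (no_types, lifting) imageE)
  obtain Fy where Fy: "Fy \<subseteq> topspace Y" "finite Fy" "FF = W ` Fy" using finite_subset_image[OF FF(1) FF(2)] by blast
  define C where "C = \<Union>(Cf ` Fy)"
  have C1: "C \<subseteq> Cs" "finite C" unfolding C_def using UC Fy by auto
  have "\<forall>y\<in>topspace Y. \<exists>U\<in>\<U>. \<forall>y'\<in>topspace Y. (\<forall>c\<in>C. \<phi> c y' = \<phi> c y) \<longrightarrow> y' \<in> U"
  proof
    fix y assume y: "y \<in> topspace Y"
    then obtain y0 where y0: "y0 \<in> Fy" "y \<in> W y0" using FF(3) Fy(3) by auto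
    have y0t: "y0 \<in> topspace Y" using y0 Fy by auto
    have "\<forall>y'\<in>topspace Y. (\<forall>c\<in>C. \<phi> c y' = \<phi> c y) \<longrightarrow> y' \<in> Uf y0"
    proof (intro ballI impI)
      fix y' assume y': "y' \<in> topspace Y" and ag: "\<forall>c\<in>C. \<phi> c y' = \<phi> c y"
      have "\<forall>c\<in>Cf y0. \<phi> c y' = \<phi> c y0"
        using ag y0 unfolding C_def W_def by auto
      then show "y' \<in> Uf y0" using UC[OF y0t] y' by blast
    qed
    then show "\<exists>U\<in>\<U>. \<forall>y'\<in>topspace Y. (\<forall>c\<in>C. \<phi> c y' = \<phi> c y) \<longrightarrow> y' \<in> U" using UC[OF y0t] by blast
  qed
  then show ?thesis using C1 by blast
qed


locale mm = rfs G Gam \<gamma> for G :: "('a, 'c) monoid_scheme" (structure) and Gam \<gamma> +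
  fixes Y :: "'b topology" and T :: "'a \<Rightarrow> 'b \<Rightarrow> 'b" and p :: "'b \<Rightarrow> nat \<Rightarrow> 'a set" and F :: "'b \<Rightarrow> real"
  assumes cY: "compact_space Y"
    and hY: "Hausdorff_space Y"
    and Tc: "\<And>g. g \<in> carrier G \<Longrightarrow> continuous_map Y Y (T g)"
    and T1: "\<And>y. y \<in> topspace Y \<Longrightarrow> T \<one> y = y"
    and Tm: "\<And>g h y. g \<in> carrier G \<Longrightarrow> h \<in> carrier G \<Longrightarrow> y \<in> topspace Y \<Longrightarrow> T (g \<otimes> h) y = T g (T h y)"
    and minY: "minimal_action G Y T"
    and pc: "continuous_map Y (invlim_top G Gam) p"
    and psurj: "p ` topspace Y = invlim G Gam"
    and peq: "\<And>g y. g \<in> carrier G \<Longrightarrow> y \<in> topspace Y \<Longrightarrow> p (T g y) = invlim_act G g (p y)"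
    and fib1: "\<And>x. x \<in> invlim G Gam \<Longrightarrow> x \<notin> {invlim_act G g Gam | g. g \<in> carrier G} \<Longrightarrow> card {y \<in> topspace Y. p y = x} = 1"
    and fib2: "\<And>x. x \<in> {invlim_act G g Gam | g. g \<in> carrier G} \<Longrightarrow> card {y \<in> topspace Y. p y = x} = 2"
    and Fc: "continuous_map Y euclideanreal F"
    and Feq: "\<And>y. y \<in> topspace Y \<Longrightarrow> p y \<noteq> Gam \<Longrightarrow> F y = fsign G Gam \<gamma> (p y)"
    and infG: "infinite (carrier G)"
    and finrc: "\<And>n. finite (rcosets (Gam n))"
begin

lemma topXT: "topspace (invlim_top G Gam) = invlim G Gam"
  unfolding invlim_top_def invlim_def by (auto simp: PiE_iff)

lemma p_in: "y \<in> topspace Y \<Longrightarrow> p y \<in> invlim G Gam"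
  using continuous_map_image_subset_topspace[OF pc] topXT by blast

lemma T_in: "g \<in> carrier G \<Longrightarrow> y \<in> topspace Y \<Longrightarrow> T g y \<in> topspace Y"
  using continuous_map_image_subset_topspace[OF Tc] by blast

lemma T_inv1: "g \<in> carrier G \<Longrightarrow> y \<in> topspace Y \<Longrightarrow> T (inv g) (T g y) = y"
  using Tm[of "inv g" g y] T1 by simp

lemma T_inv2: "g \<in> carrier G \<Longrightarrow> y \<in> topspace Y \<Longrightarrow> T g (T (inv g) y) = y"
  using Tm[of g "inv g" y] T1 by simp

lemma e_in: "Gam \<in> invlim G Gam"
  using pt_in[of \<one>] pt_one by simp

lemma act_one_e: "invlim_act G \<one> Gam = Gam"
  using act_pt[of \<one> \<one>] pt_one by simp

lemma e_orb: "Gam \<in> {invlim_act G g Gam | g. g \<in> carrier G}"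
  using act_one_e by force

lemma coord_cont: "continuous_map Y (discrete_topology (rcosets (Gam N))) (\<lambda>y. p y N)"
proof -
  have "continuous_map (invlim_top G Gam) (discrete_topology (rcosets (Gam N))) (\<lambda>x. x N)"
    unfolding invlim_top_def
    by (rule continuous_map_from_subtopology) (rule continuous_map_product_projection, simp)
  from continuous_map_compose[OF pc this] show ?thesis by (simp add: o_def)
qed

lemma coord_open: "openin Y {y \<in> topspace Y. p y N = v}"
proof -
  have "openin Y {y \<in> topspace Y. p y N \<in> {v} \<inter> rcosets (Gam N)}"
    by (rule openin_continuous_map_preimage[OF coord_cont]) auto
  moreover have "{y \<in> topspace Y. p y N \<in> {v} \<inter> rcosets (Gam N)} = {y \<in> topspace Y. p y N = v}"
    using p_in unfolding invlim_def by auto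
  ultimately show ?thesis by simp
qed

lemma coord_closed: "closedin Y {y \<in> topspace Y. p y N = v}"
proof -
  have "closedin Y {y \<in> topspace Y. p y N \<in> {v} \<inter> rcosets (Gam N)}"
    by (rule closedin_continuous_map_preimage[OF coord_cont]) auto
  moreover have "{y \<in> topspace Y. p y N \<in> {v} \<inter> rcosets (Gam N)} = {y \<in> topspace Y. p y N = v}"
    using p_in unfolding invlim_def by auto
  ultimately show ?thesis by simp
qed

lemma fib_e_fin: "finite {y \<in> topspace Y. p y = Gam}"
  by (rule card_ge_0_finite) (simp add: fib2[OF e_orb])

lemma invlim_infinite: "infinite (invlim G Gam)"
proof
  assume fin: "finite (invlim G Gam)"
  have inj: "inj_on pt (carrier G)" using pt_inj by (auto intro: inj_onI)
  have "pt ` carrier G \<subseteq> invlim G Gam" using pt_in by auto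
  then have "finite (pt ` carrier G)" using fin by (rule finite_subset)
  then have "finite (carrier G)" using finite_imageD[OF _ inj] by blast
  then show False using infG by simp
qed

lemma Fvals: "y \<in> topspace Y \<Longrightarrow> F y \<in> {1, -1}"
proof (rule ccontr)
  assume y: "y \<in> topspace Y" and nF: "F y \<notin> {1, -1}"
  define Ob where "Ob = {z \<in> topspace Y. F z \<in> - {1, -1}}"
  have "open (- {1, -1 :: real})" by (intro open_Compl finite_imp_closed) simp
  then have Oo: "openin Y Ob" unfolding Ob_def
    by (intro openin_continuous_map_preimage[OF Fc]) simp
  have "Ob \<subseteq> {z \<in> topspace Y. p z = Gam}"
  proof
    fix z assume z: "z \<in> Ob"
    then have zt: "z \<in> topspace Y" unfolding Ob_def by auto
    have "p z = Gam"
    proof (rule ccontr)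
      assume "p z \<noteq> Gam"
      then have "F z = fsign G Gam \<gamma> (p z)" using Feq zt by simp
      then have "F z \<in> {1, -1}" unfolding fsign_def by simp
      then show False using z unfolding Ob_def by auto
    qed
    then show "z \<in> {z \<in> topspace Y. p z = Gam}" using zt by simp
  qed
  then have finO: "finite Ob" using fib_e_fin finite_subset by blast
  have yO: "y \<in> Ob" using y nF unfolding Ob_def by simp
  have t1: "t1_space Y" using Hausdorff_imp_t1_space[OF hY] .
  have "closedin Y (Ob - {y})"
    using t1 finO unfolding t1_space_closedin_finite Ob_def by auto
  then have "openin Y (Ob - (Ob - {y}))" using Oo by (intro openin_diff)
  moreover have "Ob - (Ob - {y}) = {y}" using yO by auto
  ultimately have yopen: "openin Y {y}" by simp
  define A where "A = {z \<in> topspace Y. \<not> openin Y {z}}"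
  have Acl: "closedin Y A"
  proof -
    have "topspace Y - A = \<Union>{{z} | z. z \<in> topspace Y \<and> openin Y {z}}" unfolding A_def by auto
    moreover have "openin Y (\<Union>{{z} | z. z \<in> topspace Y \<and> openin Y {z}})" by (intro openin_Union) auto
    ultimately show ?thesis unfolding closedin_def A_def by auto
  qed
  have Ainv: "\<forall>g\<in>carrier G. T g ` A \<subseteq> A"
  proof (intro ballI subsetI)
    fix g w assume g: "g \<in> carrier G" and w: "w \<in> T g ` A"
    then obtain z where z: "z \<in> A" "w = T g z" by auto
    have zt: "z \<in> topspace Y" using z unfolding A_def by auto
    have "\<not> openin Y {T g z}"
    proof
      assume o: "openin Y {T g z}"
      have "openin Y {u \<in> topspace Y. T g u \<in> {T g z}}" using openin_continuous_map_preimage[OF Tc[OF g] o] .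
      moreover have "{u \<in> topspace Y. T g u \<in> {T g z}} = {z}"
      proof
        show "{u \<in> topspace Y. T g u \<in> {T g z}} \<subseteq> {z}"
        proof
          fix u assume "u \<in> {u \<in> topspace Y. T g u \<in> {T g z}}"
          then have u: "u \<in> topspace Y" "T g u = T g z" by auto
          then have "T (inv g) (T g u) = T (inv g) (T g z)" by simp
          then show "u \<in> {z}" using T_inv1[OF g u(1)] T_inv1[OF g zt] by simp
        qed
        show "{z} \<subseteq> {u \<in> topspace Y. T g u \<in> {T g z}}" using zt by auto
      qed
      ultimately have "openin Y {z}" by simp
      then show False using z unfolding A_def by auto
    qed
    then show "w \<in> A" unfolding A_def using z T_in[OF g zt] by auto
  qed
  have "A = {} \<or> A = topspace Y" using minY Acl Ainv unfolding minimal_action_def by blast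
  moreover have "A \<noteq> topspace Y" using y yopen unfolding A_def by auto
  ultimately have A0: "A = {}" by simp
  then have allopen: "\<forall>z\<in>topspace Y. openin Y {z}" unfolding A_def by auto
  obtain FF where FF: "finite FF" "FF \<subseteq> (\<lambda>z. {z}) ` topspace Y" "topspace Y \<subseteq> \<Union>FF"
    using cY[unfolded compact_space_alt, rule_format, of "(\<lambda>z. {z}) ` topspace Y"] allopen by auto
  have "finite (\<Union>FF)" using FF(1,2) by auto
  then have "finite (topspace Y)" using FF(3) finite_subset by blast
  then have "finite (invlim G Gam)" using psurj by (metis finite_imageI)
  then show False using invlim_infinite by simp
qed

lemma F_open: "openin Y {y \<in> topspace Y. F y = v}"
proof (cases "v \<in> {1, -1}")
  case True
  have "openin Y {y \<in> topspace Y. F y \<in> ball v 1}"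
    by (rule openin_continuous_map_preimage[OF Fc]) simp
  moreover have "{y \<in> topspace Y. F y \<in> ball v 1} = {y \<in> topspace Y. F y = v}"
  proof -
    have "F y \<in> ball v 1 \<longleftrightarrow> F y = v" if "y \<in> topspace Y" for y
      using Fvals[OF that] True by (auto simp: dist_real_def)
    then show ?thesis by auto
  qed
  ultimately show ?thesis by simp
next
  case False
  then have e: "{y \<in> topspace Y. F y = v} = {}" using Fvals by auto
  show ?thesis unfolding e by simp
qed

lemma F_closed: "closedin Y {y \<in> topspace Y. F y = v}"
proof -
  have "closedin Y {y \<in> topspace Y. F y \<in> {v}}"
    by (rule closedin_continuous_map_preimage[OF Fc]) simp
  then show ?thesis by simp
qed


lemma e_level: "x \<in> invlim G Gam \<Longrightarrow> m \<le> n \<Longrightarrow> x n = Gam n \<Longrightarrow> x m = Gam m"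
  using cos_determ[of x m n \<one>] coset_mult_one[OF subc] by simp

lemma wit_plus: "\<exists>a\<in>Gam N. pt a \<noteq> Gam \<and> pt a \<in> Xplus G Gam \<gamma>"
proof -
  have g: "\<gamma> (Suc N) \<in> Gam N - Gam (Suc N)" using gam[of "Suc N"] by simp
  have gc: "\<gamma> (Suc N) \<in> carrier G" using gam_c[of "Suc N"] by simp
  have "\<exists>n\<ge>1. pt (\<gamma> (Suc N)) n = Gam n #> \<gamma> n" unfolding pt_def by (rule exI[of _ "Suc N"]) simp
  then have "pt (\<gamma> (Suc N)) \<in> Xplus G Gam \<gamma>" using Xplus_iff[OF pt_in[OF gc]] by simp
  moreover have "pt (\<gamma> (Suc N)) \<noteq> Gam"
  proof
    assume "pt (\<gamma> (Suc N)) = Gam"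
    then have "Gam (Suc N) #> \<gamma> (Suc N) = Gam (Suc N)" unfolding pt_def by metis
    then show False using ceq_one[OF gc] g by simp
  qed
  ultimately show ?thesis using g by blast
qed

lemma card2: "card {A, B} \<le> 2"
  by (simp add: card_insert_if)

lemma wit_minus: "\<exists>a\<in>Gam N. pt a \<noteq> Gam \<and> pt a \<notin> Xplus G Gam \<gamma>"
proof -
  let ?H = "Gam (Suc N)"
  have g: "\<gamma> (Suc N) \<in> Gam N - ?H" using gam[of "Suc N"] by simp
  have gc: "\<gamma> (Suc N) \<in> carrier G" using gam_c[of "Suc N"] by simp
  have "\<exists>a\<in>Gam N. ?H #> a \<notin> {?H, ?H #> \<gamma> (Suc N)}"
  proof (rule ccontr)
    assume "\<not> ?thesis"
    then have "{?H #> g | g. g \<in> Gam N} \<subseteq> {?H, ?H #> \<gamma> (Suc N)}" by auto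
    then have "card {?H #> g | g. g \<in> Gam N} \<le> card {?H, ?H #> \<gamma> (Suc N)}" by (intro card_mono) auto
    then show False using card2[of ?H "?H #> \<gamma> (Suc N)"] idx[of N] by linarith
  qed
  then obtain a where a: "a \<in> Gam N" "?H #> a \<noteq> ?H" "?H #> a \<noteq> ?H #> \<gamma> (Suc N)" by blast
  have ac: "a \<in> carrier G" using a(1) subc by blast
  have "\<forall>n\<ge>1. Gam n #> a \<noteq> Gam n #> \<gamma> n"
  proof (intro allI impI)
    fix n :: nat assume n: "n \<ge> 1"
    have gn: "\<gamma> n \<in> Gam (n - 1) - Gam n" "\<gamma> n \<in> carrier G" using gam[OF n] gam_c[OF n] by auto
    consider "n \<le> N" | "n = Suc N" | "n > Suc N" by linarith
    then show "Gam n #> a \<noteq> Gam n #> \<gamma> n"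
    proof cases
      case 1
      then have "a \<in> Gam n" using a(1) mono by blast
      then have "Gam n #> a = Gam n" using ceq_one[OF ac] by simp
      moreover have "Gam n #> \<gamma> n \<noteq> Gam n" using ceq_one[OF gn(2)] gn(1) by simp
      ultimately show ?thesis by simp
    next
      case 2 then show ?thesis using a(3) by simp
    next
      case 3
      show ?thesis
      proof
        assume e: "Gam n #> a = Gam n #> \<gamma> n"
        have "?H #> a = ?H #> \<gamma> n" using cdown[OF _ ac gn(2) e] 3 by simp
        moreover have "Gam (n - 1) \<subseteq> ?H" using mono[of "Suc N" "n - 1"] 3 by simp
        then have "\<gamma> n \<in> ?H" using gn(1) by blast
        then have "?H #> \<gamma> n = ?H" using ceq_one[OF gn(2)] by simp
        ultimately show False using a(2) by simp
      qed
    qed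
  qed
  then have "pt a \<notin> Xplus G Gam \<gamma>" using Xplus_iff[OF pt_in[OF ac]] unfolding pt_def by simp
  moreover have "pt a \<noteq> Gam"
  proof
    assume "pt a = Gam"
    then have "?H #> a = ?H" unfolding pt_def by metis
    then show False using a(2) by simp
  qed
  ultimately show ?thesis using a(1) by blast
qed

lemma wit: "s \<in> {1, -1} \<Longrightarrow> \<exists>y\<in>topspace Y. F y = s \<and> p y N = Gam N"
proof -
  assume s: "s \<in> {1, -1}"
  obtain a where a: "a \<in> Gam N" "pt a \<noteq> Gam" "fsign G Gam \<gamma> (pt a) = s"
  proof (cases "s = 1")
    case True
    obtain a where "a \<in> Gam N" "pt a \<noteq> Gam" "pt a \<in> Xplus G Gam \<gamma>" using wit_plus by blast
    then show ?thesis using that True unfolding fsign_def by auto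
  next
    case False
    obtain a where "a \<in> Gam N" "pt a \<noteq> Gam" "pt a \<notin> Xplus G Gam \<gamma>" using wit_minus by blast
    then show ?thesis using that False s unfolding fsign_def by auto
  qed
  have ac: "a \<in> carrier G" using a(1) subc by blast
  have "pt a \<in> p ` topspace Y" using psurj pt_in[OF ac] by simp
  then obtain y where y: "y \<in> topspace Y" "p y = pt a" by auto
  have "F y = s" using Feq[OF y(1)] y(2) a by simp
  moreover have "p y N = Gam N" using y(2) ceq_one[OF ac] a(1) unfolding pt_def by simp
  ultimately show ?thesis using y(1) by blast
qed

lemma sep_e:
  assumes z1: "z1 \<in> topspace Y" and z2: "z2 \<in> topspace Y" and ne: "z1 \<noteq> z2"
    and p1: "p z1 = Gam" and p2: "p z2 = Gam"
  shows "F z1 \<noteq> F z2"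
proof
  assume eq: "F z1 = F z2"
  let ?Phi = "{y \<in> topspace Y. p y = Gam}"
  have sub: "{z1, z2} \<subseteq> ?Phi" using z1 z2 p1 p2 by auto
  have "card {z1, z2} = card ?Phi" using fib2[OF e_orb] ne by simp
  then have Phi: "?Phi = {z1, z2}" using card_subset_eq[OF fib_e_fin sub] by simp
  define c where "c = F z1"
  have c: "c \<in> {1, -1}" using Fvals[OF z1] unfolding c_def .
  have Fc': "\<And>y. y \<in> ?Phi \<Longrightarrow> F y = c" using Phi eq unfolding c_def by auto
  define K where "K N = {y \<in> topspace Y. F y = - c} \<inter> {y \<in> topspace Y. p y N = Gam N}" for N
  have Kcl: "closedin Y (K N)" for N unfolding K_def using F_closed coord_closed by (intro closedin_Int)
  have Kne: "K N \<noteq> {}" for N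
  proof -
    have "- c \<in> {1, -1}" using c by auto
    then obtain y where "y \<in> topspace Y" "F y = - c" "p y N = Gam N" using wit by blast
    then show ?thesis unfolding K_def by auto
  qed
  have Kanti: "antimono_on UNIV K"
  proof (rule monotone_onI)
    fix m n :: nat assume "m \<le> n"
    then show "K n \<le> K m" unfolding K_def using e_level p_in by auto
  qed
  have "\<Inter> (range K) \<noteq> {}" using compact_space_imp_nest[OF cY Kcl Kne Kanti] .
  then obtain y where y: "\<And>N. y \<in> K N" by blast
  have yt: "y \<in> topspace Y" and Fy: "F y = - c" using y[of 0] unfolding K_def by auto
  have "p y = Gam"
  proof
    fix N show "p y N = Gam N" using y[of N] unfolding K_def by auto
  qed
  then have "F y = c" using Fc' yt by simp
  then show False using Fy c by auto
qed

lemma sep: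
  assumes y1: "y1 \<in> topspace Y" and y2: "y2 \<in> topspace Y" and ne: "y1 \<noteq> y2"
  shows "(\<exists>N. p y1 N \<noteq> p y2 N) \<or> (\<exists>h\<in>carrier G. F (T h y1) \<noteq> F (T h y2))"
proof (cases "p y1 = p y2")
  case False then show ?thesis by auto
next
  case True
  define x where "x = p y1"
  have x: "x \<in> invlim G Gam" using p_in[OF y1] unfolding x_def .
  have orb: "x \<in> {invlim_act G g Gam | g. g \<in> carrier G}"
  proof (rule ccontr)
    assume "x \<notin> {invlim_act G g Gam | g. g \<in> carrier G}"
    then have "card {y \<in> topspace Y. p y = x} = 1" using fib1[OF x] by simp
    then obtain w where "{y \<in> topspace Y. p y = x} = {w}" by (rule card_1_singletonE)
    moreover have "y1 \<in> {y \<in> topspace Y. p y = x}" "y2 \<in> {y \<in> topspace Y. p y = x}"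
      using y1 y2 True unfolding x_def by auto
    ultimately show False using ne by auto
  qed
  then obtain g where g: "g \<in> carrier G" "x = invlim_act G g Gam" by auto
  have ig: "inv g \<in> carrier G" using g by simp
  define z1 where "z1 = T (inv g) y1"
  define z2 where "z2 = T (inv g) y2"
  have z: "z1 \<in> topspace Y" "z2 \<in> topspace Y" unfolding z1_def z2_def using T_in[OF ig] y1 y2 by auto
  have "p z1 = Gam" unfolding z1_def using peq[OF ig y1] act_inv[OF g(1) e_in] g(2) unfolding x_def by simp
  moreover have "p z2 = Gam" unfolding z2_def using peq[OF ig y2] act_inv[OF g(1) e_in] g(2) True unfolding x_def by simp
  moreover have "z1 \<noteq> z2"
  proof
    assume "z1 = z2"
    then have "T g z1 = T g z2" by simp
    then show False using T_inv2[OF g(1) y1] T_inv2[OF g(1) y2] ne unfolding z1_def z2_def by simp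
  qed
  ultimately have "F z1 \<noteq> F z2" using sep_e z by blast
  then show ?thesis using ig unfolding z1_def z2_def by blast
qed


definition phi :: "nat + 'a \<Rightarrow> 'b \<Rightarrow> 'a set + real" where
  "phi c y = (case c of Inl N \<Rightarrow> Inl (p y N) | Inr h \<Rightarrow> Inr (F (T h y)))"

lemma phi_lc:
  assumes c: "c \<in> range Inl \<union> Inr ` carrier G"
  shows "openin Y {y \<in> topspace Y. phi c y = v}"
proof (cases c)
  case (Inl N)
  show ?thesis
  proof (cases v)
    case (Inl w)
    then have "{y \<in> topspace Y. phi c y = v} = {y \<in> topspace Y. p y N = w}"
      using \<open>c = Inl N\<close> unfolding phi_def by auto
    then show ?thesis using coord_open by simp
  next
    case (Inr r)
    then have e: "{y \<in> topspace Y. phi c y = v} = {}" using \<open>c = Inl N\<close> unfolding phi_def by auto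
    show ?thesis unfolding e by simp
  qed
next
  case (Inr h)
  then have h: "h \<in> carrier G" using c by auto
  show ?thesis
  proof (cases v)
    case (Inl w)
    then have e: "{y \<in> topspace Y. phi c y = v} = {}" using \<open>c = Inr h\<close> unfolding phi_def by auto
    show ?thesis unfolding e by simp
  next
    case (Inr r)
    have "openin Y {y \<in> topspace Y. T h y \<in> {z \<in> topspace Y. F z = r}}"
      using openin_continuous_map_preimage[OF Tc[OF h] F_open] .
    moreover have "{y \<in> topspace Y. T h y \<in> {z \<in> topspace Y. F z = r}} = {y \<in> topspace Y. phi c y = v}"
      using T_in[OF h] \<open>c = Inr h\<close> Inr unfolding phi_def by auto
    ultimately show ?thesis by simp
  qed
qed

lemma phi_sep:
  assumes "y1 \<in> topspace Y" "y2 \<in> topspace Y" "y1 \<noteq> y2"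
  shows "\<exists>c\<in>range Inl \<union> Inr ` carrier G. phi c y1 \<noteq> phi c y2"
proof -
  from sep[OF assms] show ?thesis
  proof
    assume "\<exists>N. p y1 N \<noteq> p y2 N"
    then obtain N where "p y1 N \<noteq> p y2 N" by blast
    then show ?thesis by (intro bexI[of _ "Inl N"]) (auto simp: phi_def)
  next
    assume "\<exists>h\<in>carrier G. F (T h y1) \<noteq> F (T h y2)"
    then obtain h where "h \<in> carrier G" "F (T h y1) \<noteq> F (T h y2)" by blast
    then show ?thesis by (intro bexI[of _ "Inr h"]) (auto simp: phi_def)
  qed
qed

definition gsel :: "'a set \<Rightarrow> (nat \<Rightarrow> 'a set) \<Rightarrow> 'a" where
  "gsel S x = (SOME g. g \<in> S \<and> (\<forall>n. ag x (inv g) n))"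

definition keyS :: "'a set \<Rightarrow> 'b \<Rightarrow> ('a \<times> real) + ('a set \<times> 'a set)" where
  "keyS S y = (if case1 S (p y) then Inl (gsel S (p y), F (T (gsel S (p y)) y))
     else Inr (AA S (p y), BB S (p y)))"

lemma gsel: "case1 S x \<Longrightarrow> gsel S x \<in> S \<and> (\<forall>n. ag x (inv (gsel S x)) n)"
  unfolding gsel_def case1_def by (rule someI_ex) blast

lemma FT: "g \<in> carrier G \<Longrightarrow> y \<in> topspace Y \<Longrightarrow> invlim_act G g (p y) \<noteq> Gam \<Longrightarrow>
    F (T g y) = fsign G Gam \<gamma> (invlim_act G g (p y))"
  using Feq[OF T_in] peq by simp

lemma keyS_det:
  assumes S: "finite S" "S \<subseteq> carrier G" and y1: "y1 \<in> topspace Y" and y2: "y2 \<in> topspace Y"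
    and k: "keyS S y1 = keyS S y2" and g: "g \<in> S"
  shows "F (T g y1) = F (T g y2)"
proof -
  have gc: "g \<in> carrier G" using g S by auto
  show ?thesis
  proof (cases "case1 S (p y1)")
    case True
    have c2: "case1 S (p y2)" using k True unfolding keyS_def by (auto split: if_splits)
    have eq: "gsel S (p y1) = gsel S (p y2)" "F (T (gsel S (p y1)) y1) = F (T (gsel S (p y2)) y2)"
      using k True c2 unfolding keyS_def by auto
    define g0 where "g0 = gsel S (p y1)"
    have g0: "g0 \<in> S" "\<forall>n. ag (p y1) (inv g0) n" using gsel[OF True] unfolding g0_def by auto
    have g0': "\<forall>n. ag (p y2) (inv g0) n" using gsel[OF c2] eq(1) unfolding g0_def by auto
    have g0c: "g0 \<in> carrier G" using g0 S by auto
    have px: "p y1 = pt (inv g0)" "p y2 = pt (inv g0)"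
      using case1_pt[OF p_in[OF y1] g0(2)] case1_pt[OF p_in[OF y2] g0'] by auto
    show ?thesis
    proof (cases "g = g0")
      case True then show ?thesis using eq(2) eq(1) unfolding g0_def by simp
    next
      case False
      have ne: "invlim_act G g (pt (inv g0)) \<noteq> Gam" using case1_act_ne[OF g0c gc False] .
      show ?thesis using FT[OF gc y1] FT[OF gc y2] px ne by simp
    qed
  next
    case False
    have c2: "\<not> case1 S (p y2)" using k False unfolding keyS_def by (auto split: if_splits)
    have eq: "AA S (p y1) = AA S (p y2)" "BB S (p y1) = BB S (p y2)"
      using k False c2 unfolding keyS_def by auto
    have n1: "invlim_act G g (p y1) \<noteq> Gam" using nc_act_ne[OF p_in[OF y1] False g S(2)] .
    have n2: "invlim_act G g (p y2) \<noteq> Gam" using nc_act_ne[OF p_in[OF y2] c2 g S(2)] .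
    have s1: "invlim_act G g (p y1) \<in> Xplus G Gam \<gamma> \<longleftrightarrow> sig (AA S (p y1)) (BB S (p y1)) g"
      using sign_char[OF S p_in[OF y1] False g] .
    have s2: "invlim_act G g (p y2) \<in> Xplus G Gam \<gamma> \<longleftrightarrow> sig (AA S (p y2)) (BB S (p y2)) g"
      using sign_char[OF S p_in[OF y2] c2 g] .
    have "F (T g y1) = fsign G Gam \<gamma> (invlim_act G g (p y1))" using FT[OF gc y1 n1] .
    also have "\<dots> = fsign G Gam \<gamma> (invlim_act G g (p y2))" using s1 s2 eq unfolding fsign_def by simp
    also have "\<dots> = F (T g y2)" using FT[OF gc y2 n2] by simp
    finally show ?thesis .
  qed
qed

lemma AA_LL:
  assumes S: "S \<subseteq> carrier G" and x: "x \<in> invlim G Gam"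
  shows "AA S x \<in> LL S"
proof (cases "AA S x = {}")
  case True then show ?thesis unfolding LL_def by simp
next
  case False
  then obtain h where h: "h \<in> AA S x" by blast
  then have "h \<in> S" unfolding AA_def by simp
  then show ?thesis using AA_cls[OF S x h] unfolding LL_def by blast
qed

lemma BB_LL:
  assumes S: "S \<subseteq> carrier G" and x: "x \<in> invlim G Gam"
  shows "BB S x \<in> LL S"
proof (cases "BB S x = {}")
  case True then show ?thesis unfolding LL_def by simp
next
  case False
  then obtain h where h: "h \<in> BB S x" by blast
  then have "h \<in> S" unfolding BB_def AA_def by simp
  then show ?thesis using BB_cls[OF S x h] unfolding LL_def by blast
qed

lemma keyS_range:
  assumes S: "finite S" "S \<subseteq> carrier G" and y: "y \<in> topspace Y"
  shows "keyS S y \<in> (S \<times> {1, -1}) <+> (LL S \<times> LL S)"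
proof (cases "case1 S (p y)")
  case True
  have g: "gsel S (p y) \<in> S" using gsel[OF True] by simp
  then have "F (T (gsel S (p y)) y) \<in> {1, -1}" using Fvals[OF T_in[OF _ y]] S by auto
  then show ?thesis using True g unfolding keyS_def by auto
next
  case False
  then show ?thesis using AA_LL[OF S(2) p_in[OF y]] BB_LL[OF S(2) p_in[OF y]] unfolding keyS_def by auto
qed

lemma keyS_card:
  assumes S: "finite S" "S \<subseteq> carrier G"
  shows "card (keyS S ` topspace Y) \<le> 2 * card S + (card S * (card S + 1) + 1)^2"
proof -
  have fL: "finite (LL S)" using card_LL[OF S(1)] by simp
  have fin: "finite ((S \<times> {1, -1 :: real}) <+> (LL S \<times> LL S))" using S(1) fL by simp
  have "card (keyS S ` topspace Y) \<le> card ((S \<times> {1, -1 :: real}) <+> (LL S \<times> LL S))"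
    using keyS_range[OF S] by (intro card_mono[OF fin]) auto
  also have "\<dots> = card S * 2 + card (LL S) * card (LL S)"
    using S(1) fL by (simp add: card_Plus card_cartesian_product)
  also have "\<dots> \<le> 2 * card S + (card S * (card S + 1) + 1)^2"
  proof -
    have "card (LL S) * card (LL S) \<le> (card S * (card S + 1) + 1) * (card S * (card S + 1) + 1)"
      using card_LL(1)[OF S(1)] by (intro mult_mono) auto
    then show ?thesis by (simp add: power2_eq_square)
  qed
  finally show ?thesis .
qed

end

lemma poly_bound:
  fixes m t :: nat
  assumes mt: "m \<le> t" and t: "1 \<le> t"
  shows "2 * m + (m * (m + 1) + 1)^2 \<le> 11 * t^4"
proof -
  have a1: "m * (m + 1) \<le> t * (t + 1)" using mt by (intro mult_mono) auto
  have a2: "t \<le> t^2" using t by (simp add: power2_eq_square)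
  have a3: "1 \<le> t^2" using t by simp
  have a4: "t * (t + 1) + 1 = t^2 + t + 1" by (simp add: power2_eq_square algebra_simps)
  have a: "m * (m + 1) + 1 \<le> 3 * t^2" using a1 a2 a3 a4 by linarith
  have b: "(m * (m + 1) + 1)^2 \<le> (3 * t^2)^2" by (rule power_mono[OF a]) simp
  have b2: "(3 * t^2)^2 = 9 * t^4" by (simp add: power_mult_distrib power_mult[symmetric])
  have c: "t \<le> t^4" using t by (simp add: self_le_power)
  show ?thesis using b b2 c mt by linarith
qed


context mm
begin

theorem null: "null_action G Y T"
  unfolding null_action_def
proof (intro allI impI)
  fix s :: "nat \<Rightarrow> 'a" and \<U> :: "'b set set"
  assume asm: "(\<forall>n. s n \<in> carrier G) \<and> finite \<U> \<and> (\<forall>U\<in>\<U>. openin Y U) \<and> \<Union>\<U> = topspace Y"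
  have sc: "\<And>n. s n \<in> carrier G" and Uo: "\<And>U. U \<in> \<U> \<Longrightarrow> openin Y U" and Ucov: "topspace Y \<subseteq> \<Union>\<U>"
    using asm by auto
  let ?Cs = "range Inl \<union> Inr ` carrier G"
  have "\<exists>C. C \<subseteq> ?Cs \<and> finite C \<and> (\<forall>y\<in>topspace Y. \<exists>U\<in>\<U>. \<forall>y'\<in>topspace Y. (\<forall>c\<in>C. phi c y' = phi c y) \<longrightarrow> y' \<in> U)"
    by (rule refine[where Y=Y and Cs="?Cs" and \<phi>=phi and \<U>=\<U>, OF cY phi_lc phi_sep Uo Ucov])
  then obtain C where C: "C \<subseteq> ?Cs" "finite C"
    "\<forall>y\<in>topspace Y. \<exists>U\<in>\<U>. \<forall>y'\<in>topspace Y. (\<forall>c\<in>C. phi c y' = phi c y) \<longrightarrow> y' \<in> U" by blast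
  have "\<forall>z\<in>topspace Y. \<exists>U. U \<in> \<U> \<and> (\<forall>y'\<in>topspace Y. (\<forall>c\<in>C. phi c y' = phi c z) \<longrightarrow> y' \<in> U)"
    using C(3) by blast
  from bchoice[OF this] obtain Uc where Uc0: "\<forall>z\<in>topspace Y. Uc z \<in> \<U> \<and> (\<forall>y'\<in>topspace Y. (\<forall>c\<in>C. phi c y' = phi c z) \<longrightarrow> y' \<in> Uc z)"
    by blast
  have Uc: "\<And>z. z \<in> topspace Y \<Longrightarrow> Uc z \<in> \<U> \<and> (\<forall>y'\<in>topspace Y. (\<forall>c\<in>C. phi c y' = phi c z) \<longrightarrow> y' \<in> Uc z)"
    using Uc0 by blast
  define Ns where "Ns = Inl -` C"
  define H where "H = Inr -` C"
  have fNs: "finite Ns" unfolding Ns_def using C(2) by (intro finite_vimageI) auto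
  have fH: "finite H" unfolding H_def using C(2) by (intro finite_vimageI) auto
  have Hc: "H \<subseteq> carrier G" unfolding H_def using C(1) by auto
  have agree: "\<forall>c\<in>C. phi c z' = phi c z"
    if a1: "\<forall>N\<in>Ns. p z' N = p z N" and a2: "\<forall>h\<in>H. F (T h z') = F (T h z)" for z z'
  proof
    fix c assume c: "c \<in> C"
    show "phi c z' = phi c z"
    proof (cases c)
      case (Inl N) then have "N \<in> Ns" using c unfolding Ns_def by simp
      then show ?thesis using a1 Inl unfolding phi_def by simp
    next
      case (Inr h) then have "h \<in> H" using c unfolding H_def by simp
      then show ?thesis using a2 Inr unfolding phi_def by simp
    qed
  qed
  define S where "S n = (\<lambda>(h, i). h \<otimes> s i) ` (H \<times> {1..n})" for n
  have fS: "finite (S n)" for n unfolding S_def using fH by simp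
  have Sc: "S n \<subseteq> carrier G" for n unfolding S_def using Hc sc by auto
  have cS: "card (S n) \<le> card H * n" for n
  proof -
    have "card (S n) \<le> card (H \<times> {1..n})" unfolding S_def using fH by (intro card_image_le) simp
    then show ?thesis by (simp add: card_cartesian_product)
  qed
  define key where "key n y = (restrict (\<lambda>N. p y N) Ns, keyS (S n) y)" for n y
  define PR where "PR = (\<Pi>\<^sub>E N\<in>Ns. rcosets (Gam N))"
  have fPR: "finite PR" unfolding PR_def using fNs finrc by (intro finite_PiE) auto
  have keysub: "key n ` topspace Y \<subseteq> PR \<times> (keyS (S n) ` topspace Y)" for n
  proof
    fix k assume "k \<in> key n ` topspace Y"
    then obtain y where y: "y \<in> topspace Y" "k = key n y" by auto
    have "\<forall>N\<in>Ns. p y N \<in> rcosets (Gam N)" using p_in[OF y(1)] unfolding invlim_def by auto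
    then have "restrict (\<lambda>N. p y N) Ns \<in> PR" unfolding PR_def by (simp add: restrict_PiE_iff)
    then show "k \<in> PR \<times> (keyS (S n) ` topspace Y)" using y unfolding key_def by auto
  qed
  have fkS: "finite (keyS (S n) ` topspace Y)" for n
  proof -
    have "finite ((S n \<times> {1, -1 :: real}) <+> (LL (S n) \<times> LL (S n)))" using fS card_LL(2)[OF fS] by simp
    moreover have "keyS (S n) ` topspace Y \<subseteq> (S n \<times> {1, -1 :: real}) <+> (LL (S n) \<times> LL (S n))"
      using keyS_range[OF fS Sc] by auto
    ultimately show ?thesis using finite_subset by blast
  qed
  have fkey: "finite (key n ` topspace Y)" for n
    using keysub[of n] fPR fkS[of n] finite_subset by blast
  have keycard: "card (key n ` topspace Y) \<le> card PR * (2 * card (S n) + (card (S n) * (card (S n) + 1) + 1)^2)" for n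
  proof -
    have "card (key n ` topspace Y) \<le> card (PR \<times> (keyS (S n) ` topspace Y))"
      using keysub[of n] fPR fkS[of n] by (intro card_mono) auto
    also have "\<dots> = card PR * card (keyS (S n) ` topspace Y)" by (simp add: card_cartesian_product)
    also have "\<dots> \<le> card PR * (2 * card (S n) + (card (S n) * (card (S n) + 1) + 1)^2)"
      using keyS_card[OF fS Sc] by (intro mult_le_mono2)
    finally show ?thesis .
  qed
  have label: "\<forall>c\<in>C. phi c (T (s i) y1) = phi c (T (s i) y2)"
    if y1: "y1 \<in> topspace Y" and y2: "y2 \<in> topspace Y" and k: "key n y1 = key n y2" and i: "i \<in> {1..n}" for n y1 y2 i
  proof (rule agree)
    have r: "restrict (\<lambda>N. p y1 N) Ns = restrict (\<lambda>N. p y2 N) Ns" and kk: "keyS (S n) y1 = keyS (S n) y2"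
      using k unfolding key_def by auto
    show "\<forall>N\<in>Ns. p (T (s i) y1) N = p (T (s i) y2) N"
    proof
      fix N assume N: "N \<in> Ns"
      have "p y1 N = p y2 N" using fun_cong[OF r, of N] N by simp
      then show "p (T (s i) y1) N = p (T (s i) y2) N"
        using peq[OF sc y1] peq[OF sc y2] unfolding invlim_act_def by simp
    qed
    show "\<forall>h\<in>H. F (T h (T (s i) y1)) = F (T h (T (s i) y2))"
    proof
      fix h assume h: "h \<in> H"
      have hc: "h \<in> carrier G" using h Hc by auto
      have hs: "h \<otimes> s i \<in> S n" unfolding S_def using h i by force
      have "F (T (h \<otimes> s i) y1) = F (T (h \<otimes> s i) y2)" using keyS_det[OF fS Sc y1 y2 kk hs] .
      then show "F (T h (T (s i) y1)) = F (T h (T (s i) y2))" using Tm[OF hc sc y1] Tm[OF hc sc y2] by simp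
    qed
  qed
  define J where "J n y0 = (\<Inter>i\<in>{1..n}. T (inv (s i)) ` Uc (T (s i) y0))" for n y0
  have Jin: "J n y0 \<in> cover_join G T s \<U> n" if y0: "y0 \<in> topspace Y" for n y0
  proof -
    have P: "\<forall>i\<in>{1..n}. T (inv (s i)) ` Uc (T (s i) y0) \<in> (\<lambda>U. T (inv (s i)) ` U) ` \<U>"
      using Uc[OF T_in[OF sc y0]] by blast
    show ?thesis unfolding cover_join_def mem_Collect_eq J_def
      by (rule exI[where x="\<lambda>i. T (inv (s i)) ` Uc (T (s i) y0)"]) (use P in simp)
  qed
  have Jcov: "y \<in> J n y0" if y0: "y0 \<in> topspace Y" and y: "y \<in> topspace Y" and k: "key n y = key n y0" for n y y0
    unfolding J_def
  proof
    fix i assume i: "i \<in> {1..n}"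
    have "\<forall>c\<in>C. phi c (T (s i) y) = phi c (T (s i) y0)" using label[OF y y0 k i] .
    then have "T (s i) y \<in> Uc (T (s i) y0)" using Uc[OF T_in[OF sc y0]] T_in[OF sc y] by blast
    moreover have "y = T (inv (s i)) (T (s i) y)" using T_inv1[OF sc y] by simp
    ultimately show "y \<in> T (inv (s i)) ` Uc (T (s i) y0)" by blast
  qed
  have Mle: "min_subcover Y (cover_join G T s \<U> n) \<le> card (key n ` topspace Y)" for n
  proof -
    define rep where "rep k = (SOME y. y \<in> topspace Y \<and> key n y = k)" for k
    have rep: "rep k \<in> topspace Y \<and> key n (rep k) = k" if "k \<in> key n ` topspace Y" for k
    proof -
      have ex: "\<exists>y. y \<in> topspace Y \<and> key n y = k" using that by auto
      show ?thesis using someI_ex[OF ex] unfolding rep_def .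
    qed
    define W where "W = (\<lambda>k. J n (rep k)) ` (key n ` topspace Y)"
    have W1: "W \<subseteq> cover_join G T s \<U> n"
    proof
      fix w assume "w \<in> W"
      then obtain k where k: "k \<in> key n ` topspace Y" "w = J n (rep k)" unfolding W_def by blast
      have "rep k \<in> topspace Y" using rep[OF k(1)] by blast
      then show "w \<in> cover_join G T s \<U> n" using Jin k(2) by simp
    qed
    have W2: "finite W" unfolding W_def using fkey by simp
    have W3: "topspace Y \<subseteq> \<Union>W"
    proof
      fix y assume y: "y \<in> topspace Y"
      have "key n y \<in> key n ` topspace Y" using y by simp
      then have r1: "rep (key n y) \<in> topspace Y" and r2: "key n (rep (key n y)) = key n y" using rep by auto
      have "y \<in> J n (rep (key n y))" using Jcov[OF r1 y r2[symmetric]] .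
      then show "y \<in> \<Union>W" unfolding W_def using y by blast
    qed
    have "min_subcover Y (cover_join G T s \<U> n) \<le> card W"
      unfolding min_subcover_def by (rule Least_le) (intro exI[of _ W] conjI W1 W2 W3 refl)
    also have "card W \<le> card (key n ` topspace Y)" unfolding W_def using fkey by (rule card_image_le)
    finally show ?thesis .
  qed
  define B where "B = card PR * 11 * (card H + 1)^4 + 1"
  define M where "M n = min_subcover Y (cover_join G T s \<U> n)" for n
  have MB: "M n \<le> B * n^4" if n: "n \<ge> 1" for n
  proof -
    have "card H * n \<le> (card H + 1) * n" by simp
    then have "card (S n) \<le> (card H + 1) * n" using cS[of n] by (rule le_trans[rotated])
    moreover have "1 \<le> (card H + 1) * n" using n by simp
    ultimately have pb: "2 * card (S n) + (card (S n) * (card (S n) + 1) + 1)^2 \<le> 11 * ((card H + 1) * n)^4"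
      by (rule poly_bound)
    have "M n \<le> card PR * (2 * card (S n) + (card (S n) * (card (S n) + 1) + 1)^2)"
      using Mle[of n] keycard[of n] unfolding M_def by linarith
    also have "\<dots> \<le> card PR * (11 * ((card H + 1) * n)^4)" using pb by (rule mult_le_mono2)
    also have "\<dots> = (card PR * 11 * (card H + 1)^4) * n^4"
    proof -
      have e: "((card H + 1) * n)^4 = (card H + 1)^4 * n^4" by (rule power_mult_distrib)
      show ?thesis by (simp only: e mult.assoc)
    qed
    also have "\<dots> \<le> B * n^4" unfolding B_def by simp
    finally show ?thesis .
  qed
  have B1: "B \<ge> 1" unfolding B_def by simp
  define a where "a n = ln (real (M n)) / real n" for n
  define b where "b n = (ln (real B) + 4 * ln (real n)) / real n" for n :: nat
  have lo: "0 \<le> a n" for n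
  proof (cases "M n = 0")
    case True then show ?thesis unfolding a_def by simp
  next
    case False then show ?thesis unfolding a_def by simp
  qed
  have up: "a n \<le> b n" if n: "n \<ge> 1" for n
  proof -
    have np: "real n > 0" using n by simp
    have hB: "1 \<le> real B" using B1 by simp
    have hn: "1 \<le> real n ^ 4" using n by (simp add: one_le_power)
    have Bn: "real B * real n ^ 4 \<ge> 1" using mult_mono[OF hB hn] by simp
    have lnBn: "ln (real B * real n ^ 4) = ln (real B) + 4 * ln (real n)"
      using B1 np by (simp add: ln_mult ln_realpow)
    have "ln (real (M n)) \<le> ln (real B * real n ^ 4)"
    proof (cases "M n = 0")
      case True then show ?thesis using Bn by simp
    next
      case False
      have "real (M n) \<le> real (B * n ^ 4)" using MB[OF n] by (simp only: of_nat_le_iff)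
      then have "real (M n) \<le> real B * real n ^ 4" by simp
      then show ?thesis using False Bn by simp
    qed
    then have "ln (real (M n)) \<le> ln (real B) + 4 * ln (real n)" using lnBn by simp
    then show ?thesis unfolding a_def b_def using np by (simp add: divide_right_mono)
  qed
  have bl: "b \<longlonglongrightarrow> 0" unfolding b_def by real_asymp
  have al: "a \<longlonglongrightarrow> 0"
  proof (rule tendsto_sandwich[of "\<lambda>n. 0" a sequentially b])
    show "\<forall>\<^sub>F n in sequentially. 0 \<le> a n" using lo by simp
    show "\<forall>\<^sub>F n in sequentially. a n \<le> b n" using up eventually_sequentially by blast
  qed (auto simp: bl)
  have "limsup (\<lambda>n. ereal (a n)) = ereal 0"
    by (rule lim_imp_Limsup) (auto simp: al)
  then show "limsup (\<lambda>n. ereal (ln (real (min_subcover Y (cover_join G T s \<U> n))) / real n)) = 0"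
    unfolding a_def M_def by (simp add: zero_ereal_def)
qed

end


lemma topXT0: "topspace (invlim_top G Gam) = invlim G Gam"
  unfolding invlim_top_def invlim_def by (auto simp: PiE_iff)

theorem theorem4p3:
  fixes G :: "('a, 'c) monoid_scheme"
    and Gam :: "nat \<Rightarrow> 'a set"
    and \<gamma> :: "nat \<Rightarrow> 'a"
    and Y :: "'b topology"
    and T :: "'a \<Rightarrow> 'b \<Rightarrow> 'b"
    and p :: "'b \<Rightarrow> (nat \<Rightarrow> 'a set)"
  assumes "group G"
    and "countable (carrier G)" and "infinite (carrier G)"
    and "residually_finite G"
    and "\<forall>n. Gam n \<lhd> G"
    and "\<forall>n. finite (rcosets\<^bsub>G\<^esub> (Gam n))"
    and "\<forall>n. Gam (Suc n) \<subset> Gam n"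
    and "(\<Inter>n. Gam n) = {\<one>\<^bsub>G\<^esub>}"
    and "\<forall>n. card {Gam (Suc n) #>\<^bsub>G\<^esub> g | g. g \<in> Gam n} > 2"
    and "\<forall>n\<ge>1. \<gamma> n \<in> Gam (n - 1) - Gam n"
    and "is_McMahon_extension G (invlim_top G Gam) (invlim_act G) Gam (fsign G Gam \<gamma>) Y T p"
  shows "null_action G Y T"
proof -
  have M: "compact_space Y" "metrizable_space Y" "continuous_action G Y T" "minimal_action G Y T"
    "continuous_map Y (invlim_top G Gam) p" "p ` topspace Y = topspace (invlim_top G Gam)"
    "\<forall>g \<in> carrier G. \<forall>y \<in> topspace Y. p (T g y) = invlim_act G g (p y)"
    "\<forall>x \<in> topspace (invlim_top G Gam). x \<notin> {invlim_act G g Gam | g. g \<in> carrier G} \<longrightarrow> card {y \<in> topspace Y. p y = x} = 1"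
    "\<forall>x \<in> {invlim_act G g Gam | g. g \<in> carrier G}. card {y \<in> topspace Y. p y = x} = 2"
    "\<exists>F. continuous_map Y euclideanreal F \<and> (\<forall>y \<in> topspace Y. p y \<noteq> Gam \<longrightarrow> F y = fsign G Gam \<gamma> (p y))"
    using assms(11) unfolding is_McMahon_extension_def by blast+
  obtain F where F: "continuous_map Y euclideanreal F" "\<forall>y \<in> topspace Y. p y \<noteq> Gam \<longrightarrow> F y = fsign G Gam \<gamma> (p y)"
    using M(10) by blast
  have CA: "\<forall>g \<in> carrier G. continuous_map Y Y (T g)" "\<forall>y \<in> topspace Y. T \<one>\<^bsub>G\<^esub> y = y"
    "\<forall>g \<in> carrier G. \<forall>h \<in> carrier G. \<forall>y \<in> topspace Y. T (g \<otimes>\<^bsub>G\<^esub> h) y = T g (T h y)"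
    using M(3) unfolding continuous_action_def by blast+
  have f1: "group G" by fact
  have f2: "\<And>n. Gam n \<lhd> G" using assms(5) by blast
  have f3: "\<And>n. Gam (Suc n) \<subseteq> Gam n" using assms(7) by blast
  have f4: "(\<Inter>n. Gam n) = {\<one>\<^bsub>G\<^esub>}" by fact
  have f5: "\<And>n. n \<ge> 1 \<Longrightarrow> \<gamma> n \<in> Gam (n - 1) - Gam n" using assms(10) by blast
  have f6: "\<And>n. card {Gam (Suc n) #>\<^bsub>G\<^esub> g | g. g \<in> Gam n} > 2" using assms(9) by blast
  have f7: "compact_space Y" by (rule M(1))
  have f8: "Hausdorff_space Y" using M(2) by (rule metrizable_imp_Hausdorff_space)
  have f9: "\<And>g. g \<in> carrier G \<Longrightarrow> continuous_map Y Y (T g)" using CA(1) by blast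
  have f10: "\<And>y. y \<in> topspace Y \<Longrightarrow> T \<one>\<^bsub>G\<^esub> y = y" using CA(2) by blast
  have f11: "\<And>g h y. g \<in> carrier G \<Longrightarrow> h \<in> carrier G \<Longrightarrow> y \<in> topspace Y \<Longrightarrow> T (g \<otimes>\<^bsub>G\<^esub> h) y = T g (T h y)"
    using CA(3) by blast
  have f12: "minimal_action G Y T" by (rule M(4))
  have f13: "continuous_map Y (invlim_top G Gam) p" by (rule M(5))
  have f14: "p ` topspace Y = invlim G Gam" using M(6) topXT0 by simp
  have f15: "\<And>g y. g \<in> carrier G \<Longrightarrow> y \<in> topspace Y \<Longrightarrow> p (T g y) = invlim_act G g (p y)" using M(7) by blast
  have f16: "\<And>x. x \<in> invlim G Gam \<Longrightarrow> x \<notin> {invlim_act G g Gam | g. g \<in> carrier G} \<Longrightarrow> card {y \<in> topspace Y. p y = x} = 1"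
    using M(8) topXT0 by blast
  have f17: "\<And>x. x \<in> {invlim_act G g Gam | g. g \<in> carrier G} \<Longrightarrow> card {y \<in> topspace Y. p y = x} = 2"
    using M(9) by blast
  have f18: "continuous_map Y euclideanreal F" by (rule F(1))
  have f19: "\<And>y. y \<in> topspace Y \<Longrightarrow> p y \<noteq> Gam \<Longrightarrow> F y = fsign G Gam \<gamma> (p y)" using F(2) by blast
  have f20: "infinite (carrier G)" by fact
  have f21: "\<And>n. finite (rcosets\<^bsub>G\<^esub> (Gam n))" using assms(6) by blast
  interpret mm G Gam \<gamma> Y T p F
    by (rule mm.intro[OF rfs.intro[OF f1 rfs_axioms.intro[OF f2 f3 f4 f5 f6]]
          mm_axioms.intro[OF f7 f8 f9 f10 f11 f12 f13 f14 f15 f16 f17 f18 f19 f20 f21]])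
  show ?thesis by (rule null)
qed

end
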